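(* For every $j\ge1$ there is an exact sequence of $A(2)_*$-comodules $$0\to\Sigma^{8j}N_1(j)\to N_1(2j)\to Q^{j-1}(A/\!/A(1))_*\to\Sigma^{8j+9}N_1(j-1)\to0.$$
   Context: $A_*$ is the mod $2$ dual Steenrod algebra with conjugate generators $\bar\xi_k$, $|\bar\xi_k|=2^k-1$; $A(i)_*$ is its quotient Hopf algebra dual to $A(i)$, and $(A/\!/A(i))_*=A_*\square_{A(i)_*}\mathbb{F}_2$; thus $(A/\!/A(1))_*=\mathbb{F}_2[\bar\xi_1^4,\bar\xi_2^2,\bar\xi_3,\bar\xi_4,\dots]$, $(A/\!/A(2))_*=\mathbb{F}_2[\bar\xi_1^8,\bar\xi_2^4,\bar\xi_3^2,\bar\xi_4,\dots]$, and $(A(2)/\!/A(1))_*=\Lambda[\bar\xi_1^4,\bar\xi_2^2,\bar\xi_3]$. Weight: $\bar\xi_k$ has weight $2^{k-1}$, multiplicatively. $N_i(j)\subset(A/\!/A(i))_*$ is the span of monomials of weight $\le2^{i+1}j$, $M_i(j)$ the span of monomials of weight exactly $2^{i+1}j$ (these are $A_*$-, resp. $A(i)_*$-subcomodules, and $(A/\!/A(2))_*=\bigoplus_kM_2(k)$ as $A(2)_*$-comodules). Let $\tau:(A/\!/A(1))_*\to(A/\!/A(2))_*\otimes(A(2)/\!/A(1))_*$ be the $\mathbb{F}_2$-linear isomorphism $\tau(\bar\xi_1^{8i_1+4\epsilon_1}\bar\xi_2^{4i_2+2\epsilon_2}\bar\xi_3^{2i_3+\epsilon_3}\bar\xi_4^{i_4}\cdots)=\bar\xi_1^{8i_1}\bar\xi_2^{4i_2}\bar\xi_3^{2i_3}\bar\xi_4^{i_4}\cdots\otimes\bar\xi_1^{4\epsilon_1}\bar\xi_2^{2\epsilon_2}\bar\xi_3^{\epsilon_3}$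 ($i_k\ge0$, $\epsilon_k\in\{0,1\}$). Put $F^j(A/\!/A(1))_*=\tau^{-1}\big((\bigoplus_{k\ge j}M_2(k))\otimes(A(2)/\!/A(1))_*\big)$; these form a decreasing filtration of $(A/\!/A(1))_*$ by $A(2)_*$-subcomodules, and $Q^j(A/\!/A(1))_*=(A/\!/A(1))_*/F^{j+1}(A/\!/A(1))_*$. $\Sigma^n$ shifts internal degree by $n$. *)

theory Defs
  imports Main
begin

text \<open>A monomial xibar_1^(e 1) xibar_2^(e 2) ... is an exponent function e with e 0 = 0
  and finite support.  An element of an F_2-vector space with a monomial basis is a finite
  set of basis monomials (addition = symmetric difference).\<close>

type_synonym mon = "nat \<Rightarrow> nat"

definition Amon :: "mon set" where
  "Amon = {e. e 0 = 0 \<and> finite {k. e k \<noteq> 0}}"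

definition mzero :: mon where "mzero = (\<lambda>_. 0)"

definition madd :: "mon \<Rightarrow> mon \<Rightarrow> mon" where "madd e f = (\<lambda>k. e k + f k)"

definition degree :: "mon \<Rightarrow> nat" where
  "degree e = (\<Sum>k\<in>{k. e k \<noteq> 0}. e k * (2 ^ k - 1))"

definition weight :: "mon \<Rightarrow> nat" where
  "weight e = (\<Sum>k\<in>{k. e k \<noteq> 0}. e k * 2 ^ (k - 1))"

text \<open>monomial basis of (A//A(1))_* = F_2[xibar_1^4, xibar_2^2, xibar_3, ...]\<close>
definition AA1mon :: "mon set" where
  "AA1mon = {e \<in> Amon. 4 dvd e 1 \<and> 2 dvd e 2}"

text \<open>monomial basis of (A//A(2))_* = F_2[xibar_1^8, xibar_2^4, xibar_3^2, xibar_4, ...]\<close>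
definition AA2mon :: "mon set" where
  "AA2mon = {e \<in> Amon. 8 dvd e 1 \<and> 4 dvd e 2 \<and> 2 dvd e 3}"

text \<open>monomial basis of A(2)_* = A_*/(xibar_1^8, xibar_2^4, xibar_3^2, xibar_4, ...)\<close>
definition A2mon :: "mon set" where
  "A2mon = {e \<in> Amon. e 1 < 8 \<and> e 2 < 4 \<and> e 3 < 2 \<and> (\<forall>k\<ge>4. e k = 0)}"

text \<open>linear extension over F_2 of a map given on basis elements\<close>
definition lsum :: "('a \<Rightarrow> 'b set) \<Rightarrow> 'a set \<Rightarrow> 'b set" where
  "lsum g X = {y. odd (card {x\<in>X. y \<in> g x})}"

text \<open>multiplication in A_* (x) A_* (a polynomial algebra; tensor monomials are pairs)\<close>
definition tmul :: "(mon \<times> mon) set \<Rightarrow> (mon \<times> mon) set \<Rightarrow> (mon \<times> mon) set" where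
  "tmul P Q = {m. odd (card {(p, q) \<in> P \<times> Q. (madd (fst p) (fst q), madd (snd p) (snd q)) = m})}"

primrec tpow :: "(mon \<times> mon) set \<Rightarrow> nat \<Rightarrow> (mon \<times> mon) set" where
  "tpow P 0 = {(mzero, mzero)}"
| "tpow P (Suc n) = tmul P (tpow P n)"

text \<open>the generator xibar_i as a monomial, with xibar_0 = 1\<close>
definition xi :: "nat \<Rightarrow> mon" where
  "xi i = (if i = 0 then mzero else (\<lambda>n. if n = i then 1 else 0))"

text \<open>coproduct of the conjugate generators:
  Delta(xibar_k) = sum_{i=0..k} xibar_i (x) xibar_(k-i)^(2^i)\<close>
definition Delta :: "nat \<Rightarrow> (mon \<times> mon) set" where
  "Delta k = {(xi i, \<lambda>n. 2 ^ i * xi (k - i) n) | i. i \<le> k}"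

primrec dmon :: "mon \<Rightarrow> nat \<Rightarrow> (mon \<times> mon) set" where
  "dmon e 0 = {(mzero, mzero)}"
| "dmon e (Suc n) = tmul (tpow (Delta (Suc n)) (e (Suc n))) (dmon e n)"

text \<open>coproduct of a monomial (the support of e lies in {1..degree e})\<close>
definition coprod :: "mon \<Rightarrow> (mon \<times> mon) set" where
  "coprod e = dmon e (degree e)"

text \<open>A(2)_*-coaction on (A//A(1))_*: the coproduct followed by the projection A_* -> A(2)_*
  on the left factor\<close>
definition coact2 :: "mon \<Rightarrow> (mon \<times> mon) set" where
  "coact2 e = {(a, b) \<in> coprod e. a \<in> A2mon}"

record comod =
  cbasis :: "mon set"
  cdeg   :: "mon \<Rightarrow> nat"
  ccoact :: "mon \<Rightarrow> (mon \<times> mon) set"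

definition elems :: "comod \<Rightarrow> mon set set" where
  "elems V = {X. finite X \<and> X \<subseteq> cbasis V}"

text \<open>a morphism of graded A(2)_*-comodules, given by its values on basis elements:
  degree-preserving, and (id (x) f) o psi = psi' o f\<close>
definition is_comod_mor :: "comod \<Rightarrow> comod \<Rightarrow> (mon \<Rightarrow> mon set) \<Rightarrow> bool" where
  "is_comod_mor V W f \<longleftrightarrow>
     (\<forall>b\<in>cbasis V. finite (f b) \<and> f b \<subseteq> cbasis W
        \<and> (\<forall>c\<in>f b. cdeg W c = cdeg V b)
        \<and> lsum (\<lambda>(a, c). {(a, d) | d. d \<in> f c}) (ccoact V b) = lsum (ccoact W) (f b))"

definition exact4 :: "comod \<Rightarrow> comod \<Rightarrow> comod \<Rightarrow> comod \<Rightarrow>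
    (mon \<Rightarrow> mon set) \<Rightarrow> (mon \<Rightarrow> mon set) \<Rightarrow> (mon \<Rightarrow> mon set) \<Rightarrow> bool" where
  "exact4 V1 V2 V3 V4 f1 f2 f3 \<longleftrightarrow>
     (\<forall>X\<in>elems V1. lsum f1 X = {} \<longrightarrow> X = {})
   \<and> lsum f1 ` elems V1 = {Y\<in>elems V2. lsum f2 Y = {}}
   \<and> lsum f2 ` elems V2 = {Y\<in>elems V3. lsum f3 Y = {}}
   \<and> lsum f3 ` elems V3 = elems V4"

text \<open>Sigma^s N_1(j): monomials of (A//A(1))_* of weight at most 4j\<close>
definition N1 :: "nat \<Rightarrow> mon set" where
  "N1 j = {e \<in> AA1mon. weight e \<le> 2 ^ (1 + 1) * j}"

definition SigmaN1 :: "nat \<Rightarrow> nat \<Rightarrow> comod" where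
  "SigmaN1 s j = \<lparr>cbasis = N1 j, cdeg = (\<lambda>e. degree e + s), ccoact = coact2\<rparr>"

definition M2 :: "nat \<Rightarrow> mon set" where
  "M2 k = {e \<in> AA2mon. weight e = 2 ^ (2 + 1) * k}"

definition tau1 :: "mon \<Rightarrow> mon" where
  "tau1 e = (\<lambda>k. if k = 1 then 8 * (e 1 div 8) else if k = 2 then 4 * (e 2 div 4)
               else if k = 3 then 2 * (e 3 div 2) else e k)"

definition tau2 :: "mon \<Rightarrow> mon" where
  "tau2 e = (\<lambda>k. if k = 1 then e 1 mod 8 else if k = 2 then e 2 mod 4
               else if k = 3 then e 3 mod 2 else 0)"

text \<open>basis of F^j(A//A(1))_* = tau^(-1)((sum_{k>=j} M_2(k)) (x) (A(2)//A(1))_*)\<close>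
definition Fbasis :: "nat \<Rightarrow> mon set" where
  "Fbasis j = {e \<in> AA1mon. \<exists>k\<ge>j. tau1 e \<in> M2 k}"

text \<open>Q^i(A//A(1))_* = (A//A(1))_*/F^(i+1): basis = complementary monomials,
  coaction = projection of the coaction\<close>
definition Qcomod :: "nat \<Rightarrow> comod" where
  "Qcomod i = \<lparr>cbasis = AA1mon - Fbasis (i + 1), cdeg = degree,
     ccoact = (\<lambda>e. {(a, b) \<in> coact2 e. b \<notin> Fbasis (i + 1)})\<rparr>"

end

theory Submission
imports Defs "HOL-Library.Poly_Mapping" "HOL-Library.Z2" "HOL-Library.Function_Algebras" "HOL-Library.Product_Plus"
begin


section \<open>F2 vector spaces as poly mappings\<close>

declare One_nat_def [simp del]

abbreviation "kys \<equiv> Poly_Mapping.keys"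
abbreviation "lkp \<equiv> Poly_Mapping.lookup"
abbreviation "sng \<equiv> Poly_Mapping.single"

lemma bit_add_self [simp]: "(b::bit) + b = 0"
  by (cases b) simp_all

lemma bit_cases': "(b::bit) = 0 \<or> b = 1" by (cases b) simp_all

lemma of_nat_bit: "(of_nat n :: bit) = (if odd n then 1 else 0)"
  by (induction n) auto

lemma pm_add_self [simp]: "(u::'a \<Rightarrow>\<^sub>0 bit) + u = 0"
  by (rule poly_mapping_eqI) (simp add: lookup_add)

lemma pm_add_self2 [simp]: "(u::'a \<Rightarrow>\<^sub>0 bit) + (u + w) = w"
  by (simp flip: add.assoc)

lemma pm_minus_eq_plus: "(u::'a \<Rightarrow>\<^sub>0 bit) - v = u + v"
  by (rule poly_mapping_eqI) (simp add: lookup_add lookup_minus)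

definition ind :: "'a set \<Rightarrow> 'a \<Rightarrow>\<^sub>0 bit" where
  "ind X = (\<Sum>x\<in>X. sng x 1)"

lemma lookup_ind: "finite X \<Longrightarrow> lkp (ind X) y = (if y \<in> X then 1 else 0)"
  unfolding ind_def by (simp add: lookup_sum lookup_single when_def)

lemma keys_ind [simp]: "finite X \<Longrightarrow> kys (ind X) = X"
  by (auto simp: in_keys_iff lookup_ind split: if_splits)

lemma ind_inj: "finite X \<Longrightarrow> finite Y \<Longrightarrow> ind X = ind Y \<Longrightarrow> X = Y"
  by (metis keys_ind)

lemma ind_keys [simp]: "ind (kys (u::'a \<Rightarrow>\<^sub>0 bit)) = u"
  by (rule poly_mapping_eqI) (auto simp: lookup_ind in_keys_iff)

lemma ind_empty [simp]: "ind {} = 0" by (simp add: ind_def)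
lemma ind_single [simp]: "ind {x} = sng x 1" by (simp add: ind_def)

lemma sum_ones_bit: "finite A \<Longrightarrow> (\<Sum>x\<in>A. (1::bit)) = (if odd (card A) then 1 else 0)"
  by (simp add: of_nat_bit)

lemma finite_lsum: "finite X \<Longrightarrow> (\<forall>x\<in>X. finite (g x)) \<Longrightarrow> finite (lsum g X)"
proof -
  assume a: "finite X" "\<forall>x\<in>X. finite (g x)"
  have "lsum g X \<subseteq> \<Union>(g ` X)"
  proof
    fix y assume "y \<in> lsum g X"
    then have "odd (card {x\<in>X. y \<in> g x})" by (simp add: lsum_def)
    then have "{x\<in>X. y \<in> g x} \<noteq> {}" by (metis card.empty even_zero)
    then show "y \<in> \<Union>(g ` X)" by blast
  qed
  then show ?thesis using a by (meson finite_UN_I finite_subset)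
qed

lemma ind_lsum:
  assumes "finite X" "\<forall>x\<in>X. finite (g x)"
  shows "ind (lsum g X) = (\<Sum>x\<in>X. ind (g x))"
proof (rule poly_mapping_eqI)
  fix y
  have "lkp (\<Sum>x\<in>X. ind (g x)) y = (\<Sum>x\<in>X. if y \<in> g x then 1 else 0)"
    using assms by (simp add: lookup_sum lookup_ind)
  also have "\<dots> = (\<Sum>x\<in>{x\<in>X. y \<in> g x}. (1::bit))"
    using assms(1) by (rule sum.inter_filter[symmetric])
  also have "\<dots> = (if odd (card {x\<in>X. y \<in> g x}) then 1 else 0)"
    by (simp add: of_nat_bit)
  moreover have "lkp (ind (lsum g X)) y = (if odd (card {x\<in>X. y \<in> g x}) then 1 else 0)"
    using finite_lsum[OF assms] by (simp add: lookup_ind lsum_def)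
  ultimately show "lkp (ind (lsum g X)) y = lkp (\<Sum>x\<in>X. ind (g x)) y" by simp
qed

definition Lin :: "('a \<Rightarrow> 'b set) \<Rightarrow> ('a \<Rightarrow>\<^sub>0 bit) \<Rightarrow> ('b \<Rightarrow>\<^sub>0 bit)" where
  "Lin F u = (\<Sum>k\<in>kys u. ind (F k))"

lemma bit_add_eq0: "(a::bit) + b = 0 \<longleftrightarrow> a = b"
  by (cases a; cases b) simp_all

lemma keys_add_bit: "kys ((u::'a \<Rightarrow>\<^sub>0 bit) + v) = (kys u - kys v) \<union> (kys v - kys u)"
  by (auto simp: in_keys_iff lookup_add bit_add_eq0)

lemma sum_symdiff_char2:
  fixes f :: "'a \<Rightarrow> 'b \<Rightarrow>\<^sub>0 bit"
  assumes "finite A" "finite B"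
  shows "sum f ((A - B) \<union> (B - A)) = sum f A + sum f B"
proof -
  have A: "sum f A = sum f (A - B) + sum f (A \<inter> B)"
    using assms by (metis sum.Int_Diff add.commute)
  have B: "sum f B = sum f (B - A) + sum f (A \<inter> B)"
    using assms by (metis sum.Int_Diff add.commute inf_commute)
  have "sum f ((A - B) \<union> (B - A)) = sum f (A - B) + sum f (B - A)"
    using assms by (intro sum.union_disjoint) auto
  then show ?thesis using A B by (simp add: ac_simps)
qed

lemma Lin_add: "Lin F (u + v) = Lin F u + Lin F v"
  unfolding Lin_def keys_add_bit by (simp add: sum_symdiff_char2)

lemma Lin_zero [simp]: "Lin F 0 = 0" by (simp add: Lin_def)

lemma Lin_single [simp]: "Lin F (sng k 1) = ind (F k)"
  by (simp add: Lin_def)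

lemma Lin_sum: "Lin F (sum f A) = (\<Sum>a\<in>A. Lin F (f a))"
  by (induction A rule: infinite_finite_induct) (auto simp: Lin_add)

lemma Lin_ind: "finite X \<Longrightarrow> Lin F (ind X) = (\<Sum>x\<in>X. ind (F x))"
  by (simp add: Lin_def)

lemma pm_as_sum: "(u::'a \<Rightarrow>\<^sub>0 bit) = (\<Sum>k\<in>kys u. sng k 1)"
  by (metis ind_def ind_keys)

lemma Lin_cong: "(\<And>k. k \<in> kys u \<Longrightarrow> F k = G k) \<Longrightarrow> Lin F u = Lin G u"
  by (simp add: Lin_def)

lemma Lin_id: "Lin (\<lambda>k. {k}) u = u"
  by (simp add: Lin_def flip: pm_as_sum)

lemma Lin_zero_if: "(\<And>k. k \<in> kys u \<Longrightarrow> F k = {}) \<Longrightarrow> Lin F u = 0"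
  by (simp add: Lin_def)

definition Lmap :: "('a \<Rightarrow> 'b) \<Rightarrow> ('a \<Rightarrow>\<^sub>0 bit) \<Rightarrow> ('b \<Rightarrow>\<^sub>0 bit)" where
  "Lmap \<phi> = Lin (\<lambda>k. {\<phi> k})"

lemma Lmap_add: "Lmap \<phi> (u + v) = Lmap \<phi> u + Lmap \<phi> v"
  by (simp add: Lmap_def Lin_add)

lemma Lmap_single [simp]: "Lmap \<phi> (sng k 1) = sng (\<phi> k) 1"
  by (simp add: Lmap_def)

lemma Lmap_sum: "Lmap \<phi> (sum f A) = (\<Sum>a\<in>A. Lmap \<phi> (f a))"
  by (simp add: Lmap_def Lin_sum)

lemma Lmap_eq: "Lmap \<phi> u = (\<Sum>k\<in>kys u. sng (\<phi> k) 1)"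
  by (simp add: Lmap_def Lin_def)

lemma Lmap_Lmap: "Lmap \<phi> (Lmap \<psi> u) = Lmap (\<phi> \<circ> \<psi>) u"
  by (simp add: Lmap_eq[of \<psi>] Lmap_sum) (simp add: Lmap_eq)

lemma Lmap_cong: "(\<And>k. k \<in> kys u \<Longrightarrow> \<phi> k = \<psi> k) \<Longrightarrow> Lmap \<phi> u = Lmap \<psi> u"
  by (simp add: Lmap_eq)

lemma Lmap_id: "(\<And>k. k \<in> kys u \<Longrightarrow> \<phi> k = k) \<Longrightarrow> Lmap \<phi> u = u"
proof -
  assume "\<And>k. k \<in> kys u \<Longrightarrow> \<phi> k = k"
  then have "Lmap \<phi> u = Lmap (\<lambda>k. k) u" by (rule Lmap_cong)
  then show ?thesis by (simp add: Lmap_def Lin_id)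
qed

lemma mult_as_sum:
  fixes u v :: "'a::comm_monoid_add \<Rightarrow>\<^sub>0 bit"
  shows "u * v = (\<Sum>k\<in>kys u. \<Sum>l\<in>kys v. sng (k + l) 1)"
proof -
  have "u * v = (\<Sum>k\<in>kys u. sng k 1) * (\<Sum>l\<in>kys v. sng l 1)"
    by (simp flip: pm_as_sum)
  also have "\<dots> = (\<Sum>k\<in>kys u. \<Sum>l\<in>kys v. sng (k + l) 1)"
    by (simp add: sum_distrib_left sum_distrib_right mult_single) (rule sum.swap)
  finally show ?thesis .
qed

lemma Lmap_mult:
  fixes u v :: "'a::comm_monoid_add \<Rightarrow>\<^sub>0 bit"
  assumes "\<And>k l. k \<in> kys u \<Longrightarrow> l \<in> kys v \<Longrightarrow> \<phi> (k + l) = \<phi>1 k + \<phi>2 l"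
  shows "Lmap (\<phi>::'a \<Rightarrow> 'b::comm_monoid_add) (u * v) = Lmap \<phi>1 u * Lmap \<phi>2 v"
proof -
  have "Lmap \<phi> (u * v) = (\<Sum>k\<in>kys u. \<Sum>l\<in>kys v. sng (\<phi>1 k + \<phi>2 l) 1)"
    by (simp add: mult_as_sum Lmap_sum assms)
  also have "\<dots> = Lmap \<phi>1 u * Lmap \<phi>2 v"
    by (simp add: Lmap_eq sum_distrib_left sum_distrib_right mult_single) (rule sum.swap)
  finally show ?thesis .
qed



definition Filt :: "('a \<Rightarrow> bool) \<Rightarrow> ('a \<Rightarrow>\<^sub>0 bit) \<Rightarrow> ('a \<Rightarrow>\<^sub>0 bit)" where
  "Filt P u = Lin (\<lambda>k. if P k then {k} else {}) u"

lemma Filt_ind: "Filt P u = ind {k \<in> kys u. P k}"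
proof -
  have "Filt P u = (\<Sum>k\<in>kys u. if P k then sng k 1 else 0)"
    unfolding Filt_def Lin_def by (rule sum.cong) auto
  also have "\<dots> = (\<Sum>k\<in>{k \<in> kys u. P k}. sng k 1)"
    by (simp add: sum.inter_filter)
  finally show ?thesis by (simp add: ind_def)
qed

lemma keys_Filt [simp]: "kys (Filt P u) = {k \<in> kys u. P k}"
  by (simp add: Filt_ind)

lemma Filt_add: "Filt P (u + v) = Filt P u + Filt P v"
  by (simp add: Filt_def Lin_add)

lemma Filt_zero_if: "(\<And>k. k \<in> kys u \<Longrightarrow> \<not> P k) \<Longrightarrow> Filt P u = 0"
  by (simp add: Filt_def Lin_def)

lemma Filt_id_if: "(\<And>k. k \<in> kys u \<Longrightarrow> P k) \<Longrightarrow> Filt P u = u"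
proof -
  assume "\<And>k. k \<in> kys u \<Longrightarrow> P k"
  then have "{k \<in> kys u. P k} = kys u" by auto
  then show ?thesis by (simp add: Filt_ind)
qed

lemma Filt_split: "u = Filt P u + Filt (\<lambda>k. \<not> P k) u"
proof -
  have "Filt P u + Filt (\<lambda>k. \<not> P k) u = Lin (\<lambda>k. {k}) u"
    by (simp add: Filt_def Lin_def sum.distrib[symmetric] ind_def)
       (rule sum.cong, auto)
  then show ?thesis by (simp add: Lin_id)
qed

lemma keys_mult_prop:
  fixes u v :: "'a::comm_monoid_add \<Rightarrow>\<^sub>0 bit"
  assumes "m \<in> kys (u * v)"
  obtains k l where "m = k + l" "k \<in> kys u" "l \<in> kys v"
  using keys_mult[of u v] assms by blast

lemma Filt_mult:
  fixes u v :: "'a::comm_monoid_add \<Rightarrow>\<^sub>0 bit"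
  assumes bad: "\<And>k l. \<not> P k \<Longrightarrow> \<not> P (k + l)"
  shows "Filt P (u * v) = Filt P (Filt P u * v)"
proof -
  have "Filt P (Filt (\<lambda>k. \<not> P k) u * v) = 0"
  proof (rule Filt_zero_if)
    fix m assume "m \<in> kys (Filt (\<lambda>k. \<not> P k) u * v)"
    then obtain k l where "m = k + l" "k \<in> kys (Filt (\<lambda>k. \<not> P k) u)"
      by (metis keys_mult_prop)
    then show "\<not> P m" using bad by auto
  qed
  then have "Filt P (u * v) = Filt P (Filt P u * v)"
    by (subst Filt_split[of u P]) (simp add: distrib_right Filt_add)
  then show ?thesis .
qed

lemma Filt_mult2:
  fixes u v :: "'a::comm_monoid_add \<Rightarrow>\<^sub>0 bit"
  assumes bad: "\<And>k l. \<not> P k \<Longrightarrow> \<not> P (k + l)"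
  shows "Filt P (u * v) = Filt P (Filt P u * Filt P v)"
proof -
  have bad': "\<And>k l. \<not> P k \<Longrightarrow> \<not> P (l + k)" using bad by (metis add.commute)
  have "Filt P (u * v) = Filt P (Filt P u * v)" by (rule Filt_mult[of P, OF bad])
  also have "\<dots> = Filt P (v * Filt P u)" by (simp only: mult.commute)
  also have "\<dots> = Filt P (Filt P v * Filt P u)" by (rule Filt_mult[of P, OF bad])
  finally show ?thesis by (simp only: mult.commute)
qed

lemma Filt_Filt [simp]: "Filt P (Filt P u) = Filt P u"
  by (rule Filt_id_if) simp

lemma Filt_power:
  fixes u :: "'a::comm_monoid_add \<Rightarrow>\<^sub>0 bit"
  assumes bad: "\<And>k l. \<not> P k \<Longrightarrow> \<not> P (k + l)"
  shows "Filt P (u ^ n) = Filt P ((Filt P u) ^ n)"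
proof (induction n)
  case 0 then show ?case by simp
next
  case (Suc n)
  have "Filt P (u ^ Suc n) = Filt P (Filt P u * Filt P (u ^ n))"
    by (subst power_Suc) (rule Filt_mult2[of P, OF bad])
  also have "\<dots> = Filt P (Filt P (Filt P u) * Filt P (Filt P u ^ n))" using Suc by simp
  also have "\<dots> = Filt P (Filt P u ^ Suc n)"
    unfolding power_Suc by (rule Filt_mult2[of P, OF bad, symmetric])
  finally show ?case .
qed

definition allkeys :: "('a \<Rightarrow> bool) \<Rightarrow> ('a \<Rightarrow>\<^sub>0 bit) \<Rightarrow> bool" where
  "allkeys P u \<longleftrightarrow> (\<forall>k\<in>kys u. P k)"

lemma allkeys_mult:
  fixes u v :: "'a::comm_monoid_add \<Rightarrow>\<^sub>0 bit"
  assumes "allkeys A u" "allkeys B v" "\<And>k l. A k \<Longrightarrow> B l \<Longrightarrow> C (k + l)"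
  shows "allkeys C (u * v)"
  using assms unfolding allkeys_def by (metis keys_mult_prop)

lemma allkeys_power:
  fixes u :: "'a::comm_monoid_add \<Rightarrow>\<^sub>0 bit"
  assumes "allkeys (A 1) u" "\<And>k l m n. A m k \<Longrightarrow> A n l \<Longrightarrow> A (m + n) (k + l)" "A 0 0"
  shows "allkeys (A n) (u ^ n)"
proof (induction n)
  case 0 then show ?case using assms(3) by (simp add: allkeys_def)
next
  case (Suc n)
  have "allkeys (A (1 + n)) (u * u ^ n)"
    by (rule allkeys_mult[OF assms(1) Suc]) (rule assms(2))
  then show ?case by (simp add: plus_1_eq_Suc)
qed

lemma allkeys_mono: "allkeys A u \<Longrightarrow> (\<And>k. A k \<Longrightarrow> B k) \<Longrightarrow> allkeys B u"
  by (simp add: allkeys_def)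

lemma allkeys_Filt: "allkeys A u \<Longrightarrow> allkeys A (Filt P u)"
  by (simp add: allkeys_def)

lemma allkeys_single [simp]: "allkeys A (sng k 1) \<longleftrightarrow> A k"
  by (simp add: allkeys_def)

lemma allkeys_add: "allkeys A u \<Longrightarrow> allkeys A v \<Longrightarrow> allkeys A (u + v)"
  using keys_add[of u v] by (auto simp: allkeys_def)

lemma allkeys_zero [simp]: "allkeys A 0" by (simp add: allkeys_def)

lemma allkeys_sum: "(\<And>i. i \<in> I \<Longrightarrow> allkeys A (f i)) \<Longrightarrow> allkeys A (sum f I)"
  by (induction I rule: infinite_finite_induct) (auto intro: allkeys_add)

lemma allkeys_one [simp]: "allkeys A (1::'a::comm_monoid_add \<Rightarrow>\<^sub>0 bit) \<longleftrightarrow> A 0"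
  by (simp add: allkeys_def)



lemma plus_fun_apply [simp]: "((e::mon) + f) k = e k + f k" by (simp add: plus_fun_def)
lemma zero_fun_apply [simp]: "(0::mon) k = 0" by (simp add: zero_fun_def)
lemma madd_eq: "madd e f = e + f" by (simp add: madd_def plus_fun_def)
lemma mzero_eq: "mzero = 0" by (simp add: mzero_def zero_fun_def)

definition FS :: "mon set" where "FS = {e. finite {k. e k \<noteq> 0}}"

lemma Amon_FS: "e \<in> Amon \<Longrightarrow> e \<in> FS" by (simp add: Amon_def FS_def)

lemma FS_add: "e \<in> FS \<Longrightarrow> f \<in> FS \<Longrightarrow> e + f \<in> FS"
proof -
  assume "e \<in> FS" "f \<in> FS"
  moreover have "{k. (e + f) k \<noteq> 0} \<subseteq> {k. e k \<noteq> 0} \<union> {k. f k \<noteq> 0}" by auto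
  ultimately show ?thesis unfolding FS_def by (auto intro: finite_subset)
qed

lemma Amon_add [intro]: "e \<in> Amon \<Longrightarrow> f \<in> Amon \<Longrightarrow> e + f \<in> Amon"
  using FS_add[of e f] by (auto simp: Amon_def FS_def)

lemma zero_Amon [simp]: "(0::mon) \<in> Amon" by (simp add: Amon_def)

lemma weight_sum: "e \<in> FS \<Longrightarrow> finite S \<Longrightarrow> {k. e k \<noteq> 0} \<subseteq> S \<Longrightarrow>
    weight e = (\<Sum>k\<in>S. e k * 2 ^ (k - 1))"
  unfolding weight_def by (rule sum.mono_neutral_left) (auto simp: FS_def)

lemma degree_sum: "e \<in> FS \<Longrightarrow> finite S \<Longrightarrow> {k. e k \<noteq> 0} \<subseteq> S \<Longrightarrow>
    degree e = (\<Sum>k\<in>S. e k * (2 ^ k - 1))"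
  unfolding Defs.degree_def by (rule sum.mono_neutral_left) (auto simp: FS_def)

lemma weight_add: "e \<in> FS \<Longrightarrow> f \<in> FS \<Longrightarrow> weight (e + f) = weight e + weight f"
proof -
  assume a: "e \<in> FS" "f \<in> FS"
  let ?S = "{k. e k \<noteq> 0} \<union> {k. f k \<noteq> 0}"
  have fin: "finite ?S" using a by (simp add: FS_def)
  have "weight (e + f) = (\<Sum>k\<in>?S. (e + f) k * 2 ^ (k - 1))"
    by (rule weight_sum[OF FS_add[OF a] fin]) auto
  also have "\<dots> = (\<Sum>k\<in>?S. e k * 2 ^ (k - 1)) + (\<Sum>k\<in>?S. f k * 2 ^ (k - 1))"
    by (simp add: algebra_simps sum.distrib)
  also have "\<dots> = weight e + weight f"
    using weight_sum[OF a(1) fin] weight_sum[OF a(2) fin] by auto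
  finally show ?thesis .
qed

lemma degree_add: "e \<in> FS \<Longrightarrow> f \<in> FS \<Longrightarrow> degree (e + f) = degree e + degree f"
proof -
  assume a: "e \<in> FS" "f \<in> FS"
  let ?S = "{k. e k \<noteq> 0} \<union> {k. f k \<noteq> 0}"
  have fin: "finite ?S" using a by (simp add: FS_def)
  have "degree (e + f) = (\<Sum>k\<in>?S. (e + f) k * (2 ^ k - 1))"
    by (rule degree_sum[OF FS_add[OF a] fin]) auto
  also have "\<dots> = (\<Sum>k\<in>?S. e k * (2 ^ k - 1)) + (\<Sum>k\<in>?S. f k * (2 ^ k - 1))"
    by (simp add: add_mult_distrib sum.distrib)
  also have "\<dots> = degree e + degree f"
    using degree_sum[OF a(1) fin] degree_sum[OF a(2) fin] by auto
  finally show ?thesis .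
qed

lemma weight_zero [simp]: "weight 0 = 0" by (simp add: weight_def)
lemma degree_zero [simp]: "degree 0 = 0" by (simp add: Defs.degree_def)

lemma weight_eq_0: "e \<in> Amon \<Longrightarrow> weight e = 0 \<Longrightarrow> e = 0"
proof (rule ccontr)
  assume a: "e \<in> Amon" "weight e = 0" "e \<noteq> 0"
  then obtain k where k: "e k \<noteq> 0" by (auto simp: fun_eq_iff)
  have fin: "finite {k. e k \<noteq> 0}" using a by (simp add: Amon_def)
  have "e k * 2 ^ (k - 1) \<le> weight e"
    unfolding weight_def by (rule member_le_sum) (use k fin in auto)
  then show False using k a by simp
qed

definition sm :: "nat \<Rightarrow> mon \<Rightarrow> mon" where "sm c e = (\<lambda>k. c * e k)"

lemma sm_apply [simp]: "sm c e k = c * e k" by (simp add: sm_def)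

definition mk :: "nat \<Rightarrow> nat \<Rightarrow> nat \<Rightarrow> mon" where
  "mk a b c = (\<lambda>k. if k = 1 then a else if k = 2 then b else if k = 3 then c else 0)"

lemma mk_apply [simp]: "mk a b c 0 = 0" "mk a b c 1 = a" "mk a b c 2 = b" "mk a b c 3 = c"
  "k \<ge> 4 \<Longrightarrow> mk a b c k = 0"
  by (auto simp: mk_def)

lemma mk_apply_Suc0 [simp]: "mk a b c (Suc 0) = a" by (simp add: mk_def)

lemma mk_add [simp]: "mk a b c + mk a' b' c' = mk (a + a') (b + b') (c + c')"
  by (auto simp: mk_def fun_eq_iff)

lemma mk_eq_iff [simp]: "mk a b c = mk a' b' c' \<longleftrightarrow> a = a' \<and> b = b' \<and> c = c'"
proof
  assume h: "mk a b c = mk a' b' c'"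
  have "mk a b c 1 = mk a' b' c' 1" "mk a b c 2 = mk a' b' c' 2" "mk a b c 3 = mk a' b' c' 3"
    using h by simp_all
  then show "a = a' \<and> b = b' \<and> c = c'" by simp
qed simp

lemma mk_zero [simp]: "mk 0 0 0 = 0" by (auto simp: mk_def fun_eq_iff)

lemma mk_eq_zero_iff [simp]: "mk a b c = 0 \<longleftrightarrow> a = 0 \<and> b = 0 \<and> c = 0"
  using mk_eq_iff[of a b c 0 0 0] by simp

lemma supp_mk: "{k. mk a b c k \<noteq> 0} \<subseteq> {1, 2, 3}" by (auto simp: mk_def)

lemma mk_Amon [simp]: "mk a b c \<in> Amon"
  unfolding Amon_def using supp_mk[of a b c] by (auto intro: finite_subset)

lemma mk_FS [simp]: "mk a b c \<in> FS" using Amon_FS by simp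

lemma weight_mk [simp]: "weight (mk a b c) = a + 2 * b + 4 * c"
  by (subst weight_sum[OF mk_FS _ supp_mk]) auto

lemma degree_mk [simp]: "degree (mk a b c) = a + 3 * b + 7 * c"
  by (subst degree_sum[OF mk_FS _ supp_mk]) auto

lemma mk_A2mon [simp]: "mk a b c \<in> A2mon \<longleftrightarrow> a < 8 \<and> b < 4 \<and> c < 2"
  by (auto simp: A2mon_def)

lemma mk_AA1mon [simp]: "mk a b c \<in> AA1mon \<longleftrightarrow> 4 dvd a \<and> 2 dvd b"
  by (auto simp: AA1mon_def)

lemma mk_AA2mon [simp]: "mk a b c \<in> AA2mon \<longleftrightarrow> 8 dvd a \<and> 4 dvd b \<and> 2 dvd c"
  by (auto simp: AA2mon_def)

lemma xi_apply: "xi i k = (if i \<noteq> 0 \<and> k = i then 1 else 0)"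
  by (simp add: xi_def mzero_def)

lemma xi_0 [simp]: "xi 0 = 0" by (simp add: xi_def mzero_eq)
lemma xi_1: "xi 1 = mk 1 0 0" by (auto simp: xi_def mk_def fun_eq_iff)
lemma xi_Suc0: "xi (Suc 0) = mk 1 0 0" by (auto simp: xi_def mk_def fun_eq_iff)
lemma xi_2: "xi 2 = mk 0 1 0" by (auto simp: xi_def mk_def fun_eq_iff)
lemma xi_3: "xi 3 = mk 0 0 1" by (auto simp: xi_def mk_def fun_eq_iff)

lemma sm_mk [simp]: "sm c (mk a b d) = mk (c * a) (c * b) (c * d)"
  by (auto simp: mk_def fun_eq_iff)

lemma sm_zero [simp]: "sm c 0 = 0" "sm 0 e = 0" by (auto simp: fun_eq_iff)
lemma sm_one [simp]: "sm 1 e = e" by (auto simp: fun_eq_iff)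

lemma sm_add_left: "sm c e + sm d e = sm (c + d) e" by (auto simp: fun_eq_iff algebra_simps)
lemma sm_add_right: "sm c (e + f) = sm c e + sm c f" by (auto simp: fun_eq_iff algebra_simps)
lemma sm_sm: "sm c (sm d e) = sm (c * d) e" by (auto simp: fun_eq_iff)

lemma supp_xi: "{k. xi i k \<noteq> 0} \<subseteq> {i}" by (auto simp: xi_apply)

lemma xi_Amon [simp]: "xi i \<in> Amon"
  unfolding Amon_def using supp_xi[of i] by (auto intro: finite_subset simp: xi_apply)

lemma sm_Amon [simp]: "e \<in> Amon \<Longrightarrow> sm c e \<in> Amon"
proof -
  assume "e \<in> Amon"
  moreover have "{k. sm c e k \<noteq> 0} \<subseteq> {k. e k \<noteq> 0}" by auto
  ultimately show ?thesis unfolding Amon_def by (auto intro: finite_subset)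
qed

lemma weight_sm_xi [simp]: "weight (sm c (xi k)) = (if k = 0 then 0 else c * 2 ^ (k - 1))"
proof -
  have "{n. sm c (xi k) n \<noteq> 0} \<subseteq> {k}" by (auto simp: xi_apply)
  then show ?thesis
    by (subst weight_sum[of _ "{k}"]) (auto intro: Amon_FS simp: xi_apply)
qed

lemma degree_sm_xi [simp]: "degree (sm c (xi k)) = c * (2 ^ k - 1)"
proof -
  have "{n. sm c (xi k) n \<noteq> 0} \<subseteq> {k}" by (auto simp: xi_apply)
  then show ?thesis
    by (subst degree_sum[of _ "{k}"]) (auto intro: Amon_FS simp: xi_apply)
qed

lemma xi_A2mon [simp]: "xi i \<in> A2mon \<longleftrightarrow> i \<le> 3"
proof
  assume "xi i \<in> A2mon"
  then have "\<forall>k\<ge>4. xi i k = 0" by (simp add: A2mon_def)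
  then show "i \<le> 3" by (cases "i \<le> 3") (auto simp: xi_apply dest: spec[of _ i])
next
  assume "i \<le> 3"
  then have "i = 0 \<or> i = 1 \<or> i = 2 \<or> i = 3" by auto
  then show "xi i \<in> A2mon" by (auto simp: xi_1 xi_2 xi_3 A2mon_def)
qed

lemma A2mon_add_left: "a + b \<in> A2mon \<Longrightarrow> a \<in> A2mon"
proof -
  assume h: "a + b \<in> A2mon"
  have "{k. a k \<noteq> 0} \<subseteq> {k. (a + b) k \<noteq> 0}" by auto
  with h show ?thesis
    unfolding A2mon_def Amon_def by (auto intro: finite_subset)
qed

lemma A2mon_add_right: "a + b \<in> A2mon \<Longrightarrow> b \<in> A2mon"
  using A2mon_add_left[of b a] by (simp add: add.commute)

lemma AA1mon_add [intro]: "e \<in> AA1mon \<Longrightarrow> f \<in> AA1mon \<Longrightarrow> e + f \<in> AA1mon"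
  by (auto simp: AA1mon_def)

lemma AA2mon_add [intro]: "e \<in> AA2mon \<Longrightarrow> f \<in> AA2mon \<Longrightarrow> e + f \<in> AA2mon"
  by (auto simp: AA2mon_def)

lemma AA2_AA1: "e \<in> AA2mon \<Longrightarrow> e \<in> AA1mon"
  by (auto simp: AA2mon_def AA1mon_def elim: dvd_trans[rotated])

lemma AA1_Amon: "e \<in> AA1mon \<Longrightarrow> e \<in> Amon" by (simp add: AA1mon_def)
lemma AA2_Amon: "e \<in> AA2mon \<Longrightarrow> e \<in> Amon" by (simp add: AA2mon_def)
lemma A2_Amon: "e \<in> A2mon \<Longrightarrow> e \<in> Amon" by (simp add: A2mon_def)

lemma zero_AA1 [simp]: "(0::mon) \<in> AA1mon" by (simp add: AA1mon_def)
lemma zero_AA2 [simp]: "(0::mon) \<in> AA2mon" by (simp add: AA2mon_def)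
lemma zero_A2 [simp]: "(0::mon) \<in> A2mon" by (simp add: A2mon_def)

definition sh :: "mon \<Rightarrow> mon" where "sh x = (\<lambda>k. if k \<le> 1 then 0 else x (k - 1))"

lemma sh_0 [simp]: "sh x 0 = 0" by (simp add: sh_def)
lemma sh_Suc [simp]: "sh x (Suc k) = (if k = 0 then 0 else x k)" by (simp add: sh_def)

lemma sh_add: "sh (x + y) = sh x + sh y" by (auto simp: sh_def fun_eq_iff)
lemma sh_zero [simp]: "sh 0 = 0" by (auto simp: sh_def fun_eq_iff)
lemma sh_mk0: "sh (mk a b 0) = mk 0 a b"
  by (auto simp: sh_def mk_def fun_eq_iff)
lemma sh_sm_xi: "1 \<le> k \<Longrightarrow> sh (sm c (xi k)) = sm c (xi (Suc k))"
  by (auto simp: sh_def xi_apply fun_eq_iff)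

lemma sh_Amon [simp]: "x \<in> Amon \<Longrightarrow> sh x \<in> Amon"
proof -
  assume a: "x \<in> Amon"
  have "{k. sh x k \<noteq> 0} \<subseteq> Suc ` {k. x k \<noteq> 0}"
  proof
    fix k assume "k \<in> {k. sh x k \<noteq> 0}"
    then have "k > 1" "x (k - 1) \<noteq> 0" by (auto simp: sh_def split: if_splits)
    then have "k = Suc (k - 1)" "k - 1 \<in> {k. x k \<noteq> 0}" by auto
    then show "k \<in> Suc ` {k. x k \<noteq> 0}" by (metis image_eqI)
  qed
  with a show ?thesis unfolding Amon_def by (auto intro: finite_subset)
qed

lemma Amon_bound: "x \<in> Amon \<Longrightarrow> \<exists>B. {k. x k \<noteq> 0} \<subseteq> {..<B}"
proof -
  assume "x \<in> Amon"
  then have f: "finite (insert 0 {k. x k \<noteq> 0})" by (simp add: Amon_def)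
  have "{k. x k \<noteq> 0} \<subseteq> {..<Suc (Max (insert 0 {k. x k \<noteq> 0}))}"
    using Max_ge[OF f] by (auto simp: less_Suc_eq_le)
  then show ?thesis by blast
qed

lemma weight_sh: "x \<in> Amon \<Longrightarrow> weight (sh x) = 2 * weight x"
proof -
  assume a: "x \<in> Amon"
  obtain B where B: "{k. x k \<noteq> 0} \<subseteq> {..<B}" using Amon_bound[OF a] by blast
  have x0: "x 0 = 0" using a by (simp add: Amon_def)
  have sB: "{k. sh x k \<noteq> 0} \<subseteq> {..<Suc B}" using B by (auto simp: sh_def)
  have "weight (sh x) = (\<Sum>k<Suc B. sh x k * 2 ^ (k - 1))"
    by (rule weight_sum[OF Amon_FS[OF sh_Amon[OF a]] _ sB]) simp
  also have "\<dots> = (\<Sum>k<B. sh x (Suc k) * 2 ^ k)"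
    by (subst sum.lessThan_Suc_shift) simp
  also have "\<dots> = (\<Sum>k<B. 2 * (x k * 2 ^ (k - 1)))"
  proof (rule sum.cong)
    fix k show "sh x (Suc k) * 2 ^ k = 2 * (x k * 2 ^ (k - 1))"
      by (cases k) (auto simp: x0)
  qed simp
  also have "\<dots> = 2 * weight x"
    by (simp add: sum_distrib_left weight_sum[OF Amon_FS[OF a] _ B])
  finally show ?thesis .
qed

lemma degree_sh: "x \<in> Amon \<Longrightarrow> degree (sh x) = degree x + 2 * weight x"
proof -
  assume a: "x \<in> Amon"
  obtain B where B: "{k. x k \<noteq> 0} \<subseteq> {..<B}" using Amon_bound[OF a] by blast
  have x0: "x 0 = 0" using a by (simp add: Amon_def)
  have sB: "{k. sh x k \<noteq> 0} \<subseteq> {..<Suc B}" using B by (auto simp: sh_def)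
  have "degree (sh x) = (\<Sum>k<Suc B. sh x k * (2 ^ k - 1))"
    by (rule degree_sum[OF Amon_FS[OF sh_Amon[OF a]] _ sB]) simp
  also have "\<dots> = (\<Sum>k<B. sh x (Suc k) * (2 ^ Suc k - 1))"
    by (subst sum.lessThan_Suc_shift) simp
  also have "\<dots> = (\<Sum>k<B. x k * (2 ^ k - 1) + 2 * (x k * 2 ^ (k - 1)))"
  proof (rule sum.cong)
    fix k assume "k \<in> {..<B}"
    show "sh x (Suc k) * (2 ^ Suc k - 1) = x k * (2 ^ k - 1) + 2 * (x k * 2 ^ (k - 1))"
    proof (cases k)
      case 0 then show ?thesis by (simp add: x0)
    next
      case (Suc m)
      have p: "(1::nat) \<le> 2 ^ m" by simp
      have "(2::nat) ^ Suc (Suc m) - 1 = (2 ^ Suc m - 1) + 2 * 2 ^ m"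
        using p by simp
      then show ?thesis using Suc by (simp add: algebra_simps)
    qed
  qed simp
  also have "\<dots> = degree x + 2 * weight x"
    by (simp add: sum.distrib sum_distrib_left weight_sum[OF Amon_FS[OF a] _ B]
        degree_sum[OF Amon_FS[OF a] _ B])
  finally show ?thesis .
qed



section \<open>The coproduct as a ring element\<close>

type_synonym R = "(mon \<times> mon) \<Rightarrow>\<^sub>0 bit"

abbreviation T :: "mon \<Rightarrow> mon \<Rightarrow> R" where "T a c \<equiv> sng (a, c) 1"

lemma fst_plus_prod: "fst (p + q) = fst p + fst q" by (simp add: plus_prod_def)
lemma snd_plus_prod: "snd (p + q) = snd p + snd q" by (simp add: plus_prod_def)
lemma pair_plus: "(a, c) + (a', c') = (a + a', c + c')" by (simp add: plus_prod_def)

lemma one_T: "(1::R) = T 0 0"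
  by (rule poly_mapping_eqI) (auto simp: lookup_one lookup_single zero_prod_def when_def)

lemma T_mult: "T a c * T a' c' = T (a + a') (c + c')"
  by (simp add: mult_single pair_plus)

lemma ind_prod_mult:
  assumes "finite P" "finite Q"
  shows "ind P * ind Q = (\<Sum>pq\<in>P \<times> Q. sng (fst pq + snd pq) (1::bit))"
proof -
  have "ind P * ind Q = (\<Sum>p\<in>P. \<Sum>q\<in>Q. sng (p + q) (1::bit))"
    by (simp add: ind_def sum_distrib_left sum_distrib_right mult_single) (rule sum.swap)
  also have "\<dots> = (\<Sum>pq\<in>P \<times> Q. sng (fst pq + snd pq) 1)"
    by (simp add: sum.cartesian_product split_def)
  finally show ?thesis .
qed

lemma tmul_lsum: "tmul P Q = lsum (\<lambda>pq. {fst pq + snd pq}) (P \<times> Q)"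
proof -
  have "\<And>m. {(p, q) \<in> P \<times> Q. (madd (fst p) (fst q), madd (snd p) (snd q)) = m}
          = {x \<in> P \<times> Q. m \<in> {fst x + snd x}}"
    by (auto simp: madd_eq plus_prod_def)
  then show ?thesis by (simp add: tmul_def lsum_def)
qed

lemma tmul_ind:
  assumes "finite P" "finite Q"
  shows "finite (tmul P Q) \<and> ind (tmul P Q) = ind P * ind Q"
proof
  show "finite (tmul P Q)" unfolding tmul_lsum by (rule finite_lsum) (use assms in auto)
  have "ind (tmul P Q) = (\<Sum>pq\<in>P \<times> Q. ind {fst pq + snd pq})"
    unfolding tmul_lsum by (rule ind_lsum) (use assms in auto)
  also have "\<dots> = ind P * ind Q" by (simp add: ind_prod_mult[OF assms])
  finally show "ind (tmul P Q) = ind P * ind Q" .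
qed

lemma tpow_ind:
  assumes "finite P"
  shows "finite (tpow P n) \<and> ind (tpow P n) = ind P ^ n"
proof (induction n)
  case 0
  have "(mzero, mzero) = (0::mon \<times> mon)" by (simp add: mzero_eq zero_prod_def)
  then show ?case by (simp add: one_poly_mapping_def)
next
  case (Suc n)
  then show ?case using tmul_ind[OF assms, of "tpow P n"] by simp
qed

lemma finite_Delta [simp]: "finite (Delta k)"
proof -
  have "Delta k = (\<lambda>i. (xi i, \<lambda>n. 2 ^ i * xi (k - i) n)) ` {..k}" by (auto simp: Delta_def)
  then show ?thesis by simp
qed

definition Del :: "nat \<Rightarrow> R" where "Del k = ind (Delta k)"

lemma xi_inj: "xi i = xi j \<Longrightarrow> i = j"
proof (rule ccontr)
  assume h: "xi i = xi j" "i \<noteq> j"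
  then have "i \<noteq> 0 \<or> j \<noteq> 0" by linarith
  then show False
  proof
    assume "i \<noteq> 0" then have "xi i i = 1" by (simp add: xi_apply)
    moreover have "xi j i = 0" using h(2) by (simp add: xi_apply)
    ultimately show False using h by simp
  next
    assume "j \<noteq> 0" then have "xi j j = 1" by (simp add: xi_apply)
    moreover have "xi i j = 0" using h(2) by (simp add: xi_apply)
    ultimately show False using h by simp
  qed
qed

lemma Del_sum: "Del k = (\<Sum>i\<le>k. T (xi i) (sm (2 ^ i) (xi (k - i))))"
proof -
  have eq: "Delta k = (\<lambda>i. (xi i, sm (2 ^ i) (xi (k - i)))) ` {..k}"
    by (auto simp: Delta_def sm_def)
  have inj: "inj_on (\<lambda>i. (xi i, sm (2 ^ i) (xi (k - i)))) {..k}"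
    by (auto intro: inj_onI dest: xi_inj)
  show ?thesis unfolding Del_def eq ind_def by (simp add: sum.reindex[OF inj])
qed

lemma dmon_ind: "finite (dmon e n) \<and> ind (dmon e n) = (\<Prod>k\<in>{1..n}. Del k ^ e k)"
proof (induction n)
  case 0
  have "(mzero, mzero) = (0::mon \<times> mon)" by (simp add: mzero_eq zero_prod_def)
  then show ?case by (simp add: one_poly_mapping_def)
next
  case (Suc n)
  have f: "finite (tpow (Delta (Suc n)) (e (Suc n)))" "ind (tpow (Delta (Suc n)) (e (Suc n))) = Del (Suc n) ^ e (Suc n)"
    using tpow_ind[of "Delta (Suc n)"] by (auto simp: Del_def)
  show ?case using Suc tmul_ind[OF f(1), of "dmon e n"] f
    by (simp add: prod.cl_ivl_Suc mult.commute)
qed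

definition CP :: "mon \<Rightarrow> R" where "CP e = (\<Prod>k\<in>{k. e k \<noteq> 0}. Del k ^ e k)"

lemma CP_S: "e \<in> FS \<Longrightarrow> finite S \<Longrightarrow> {k. e k \<noteq> 0} \<subseteq> S \<Longrightarrow> CP e = (\<Prod>k\<in>S. Del k ^ e k)"
  unfolding CP_def by (rule prod.mono_neutral_left) (auto simp: FS_def)

lemma supp_degree: "e \<in> Amon \<Longrightarrow> {k. e k \<noteq> 0} \<subseteq> {1..degree e}"
proof
  fix k assume a: "e \<in> Amon" and k: "k \<in> {k. e k \<noteq> 0}"
  then have k1: "k \<ge> 1" by (cases k) (auto simp: Amon_def)
  have fin: "finite {k. e k \<noteq> 0}" using a by (simp add: Amon_def)
  have "e k * (2 ^ k - 1) \<le> degree e"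
    unfolding Defs.degree_def by (rule member_le_sum) (use k fin in auto)
  moreover have "k \<le> 2 ^ k - 1" using less_exp[of k] by linarith
  moreover have "2 ^ k - 1 \<le> e k * (2 ^ k - 1)"
    using k mult_le_mono1[of 1 "e k" "2 ^ k - 1"] by simp
  ultimately have "k \<le> degree e" by linarith
  then show "k \<in> {1..degree e}" using k1 by simp
qed

lemma coprod_CP: "e \<in> Amon \<Longrightarrow> finite (coprod e) \<and> ind (coprod e) = CP e"
  using dmon_ind[of e "degree e"] CP_S[OF Amon_FS _ supp_degree]
  by (simp add: coprod_def)

lemma CP_zero [simp]: "CP 0 = 1" by (simp add: CP_def)

lemma CP_add: "e \<in> FS \<Longrightarrow> f \<in> FS \<Longrightarrow> CP (e + f) = CP e * CP f"
proof -
  assume a: "e \<in> FS" "f \<in> FS"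
  let ?S = "{k. e k \<noteq> 0} \<union> {k. f k \<noteq> 0}"
  have fin: "finite ?S" using a by (simp add: FS_def)
  have "CP (e + f) = (\<Prod>k\<in>?S. Del k ^ (e + f) k)"
    by (rule CP_S[OF FS_add[OF a] fin]) auto
  also have "\<dots> = (\<Prod>k\<in>?S. Del k ^ e k) * (\<Prod>k\<in>?S. Del k ^ f k)"
    by (simp add: power_add prod.distrib)
  also have "\<dots> = CP e * CP f"
    using CP_S[OF a(1) fin] CP_S[OF a(2) fin] by auto
  finally show ?thesis .
qed

lemma CP_sm_xi: "CP (sm c (xi k)) = (if k = 0 then 1 else Del k ^ c)"
proof -
  have s: "{n. sm c (xi k) n \<noteq> 0} \<subseteq> {k}" by (auto simp: xi_apply)
  show ?thesis
    by (subst CP_S[OF Amon_FS _ s]) (auto simp: xi_apply)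
qed

lemma CP_xi: "k \<noteq> 0 \<Longrightarrow> CP (xi k) = Del k"
  using CP_sm_xi[of 1 k] by (simp del: sm_apply add: sm_def)

lemma CP_mk: "CP (mk a b c) = Del 1 ^ a * Del 2 ^ b * Del 3 ^ c"
  by (subst CP_S[OF mk_FS _ supp_mk]) auto

section \<open>Characteristic 2 and powers\<close>

lemma frob2: "((u::R) + v) ^ 2 = u ^ 2 + v ^ 2"
proof -
  have "(u + v) ^ 2 = u ^ 2 + v ^ 2 + (u * v + u * v)" by (simp add: power2_eq_square algebra_simps)
  then show ?thesis by simp
qed

lemma frob2_sum: "(sum (f::'i \<Rightarrow> R) I) ^ 2 = (\<Sum>i\<in>I. f i ^ 2)"
  by (induction I rule: infinite_finite_induct) (auto simp: frob2)

lemma frob_sum: "(sum (f::'i \<Rightarrow> R) I) ^ (2 ^ r) = (\<Sum>i\<in>I. f i ^ (2 ^ r))"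
proof (induction r)
  case 0 then show ?case by simp
next
  case (Suc r)
  have "(sum f I) ^ (2 ^ Suc r) = ((sum f I) ^ (2 ^ r)) ^ 2" by (simp add: power_mult[symmetric] mult.commute)
  also have "\<dots> = (\<Sum>i\<in>I. (f i ^ (2 ^ r)) ^ 2)" by (simp add: Suc frob2_sum)
  also have "\<dots> = (\<Sum>i\<in>I. f i ^ (2 ^ Suc r))" by (simp add: power_mult[symmetric] mult.commute)
  finally show ?case .
qed

lemma T_power: "T a c ^ n = T (sm n a) (sm n c)"
proof (induction n)
  case 0 then show ?case using sm_zero(2)[of a] sm_zero(2)[of c] by (simp only: power_0 one_T)
next
  case (Suc n)
  have e: "a + sm n a = sm (Suc n) a" "c + sm n c = sm (Suc n) c" by (auto simp: fun_eq_iff)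
  show ?case by (simp only: power_Suc Suc.IH T_mult e)
qed

lemma Del_pow2: "Del k ^ (2 ^ r) = (\<Sum>i\<le>k. T (sm (2 ^ r) (xi i)) (sm (2 ^ r * 2 ^ i) (xi (k - i))))"
  by (simp add: Del_sum frob_sum T_power sm_sm)



section \<open>Projection to A(2) on the left\<close>

definition pp :: "R \<Rightarrow> R" where "pp u = Filt (\<lambda>k. fst k \<in> A2mon) u"

lemma pp_bad: "\<not> fst k \<in> A2mon \<Longrightarrow> \<not> fst (k + l) \<in> A2mon"
  using A2mon_add_left by (auto simp: fst_plus_prod)

lemma pp_mult: "pp (u * v) = pp (pp u * pp v)"
  unfolding pp_def by (rule Filt_mult2) (rule pp_bad)

lemma pp_mult1: "pp (u * v) = pp (pp u * v)"
  unfolding pp_def by (rule Filt_mult) (rule pp_bad)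

lemma pp_power: "pp (u ^ n) = pp ((pp u) ^ n)"
  unfolding pp_def by (rule Filt_power) (rule pp_bad)

lemma pp_pp [simp]: "pp (pp u) = pp u" by (simp add: pp_def)
lemma pp_zero [simp]: "pp 0 = 0" by (simp add: pp_def Filt_def)
lemma pp_add: "pp (u + v) = pp u + pp v" by (simp add: pp_def Filt_add)
lemma pp_sum: "pp (sum f I) = (\<Sum>i\<in>I. pp (f i))"
  by (induction I rule: infinite_finite_induct) (auto simp: pp_add)

lemma pp_T: "pp (T a c) = (if a \<in> A2mon then T a c else 0)"
proof (cases "a \<in> A2mon")
  case True
  then have "{k \<in> kys (T a c). fst k \<in> A2mon} = {(a, c)}" by auto
  then show ?thesis using True by (simp add: pp_def Filt_ind)
next
  case False
  then show ?thesis unfolding pp_def by (subst Filt_zero_if) auto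
qed

lemma keys_pp: "kys (pp u) = {k \<in> kys u. fst k \<in> A2mon}" by (simp add: pp_def)

lemma coact2_CP: "e \<in> Amon \<Longrightarrow> finite (coact2 e) \<and> ind (coact2 e) = pp (CP e)"
proof -
  assume a: "e \<in> Amon"
  have c: "coprod e = kys (CP e)" using coprod_CP[OF a] by (metis keys_ind)
  have "coact2 e = {k \<in> kys (CP e). fst k \<in> A2mon}" by (auto simp: coact2_def c)
  then show ?thesis by (simp add: pp_def Filt_ind)
qed

lemma allkeys_power_w:
  fixes u :: "'a::comm_monoid_add \<Rightarrow>\<^sub>0 bit"
  assumes "allkeys (A w) u" "\<And>k l m n. A m k \<Longrightarrow> A n l \<Longrightarrow> A (m + n) (k + l)" "A 0 0"
  shows "allkeys (A (n * w)) (u ^ n)"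
proof (induction n)
  case 0 then show ?case using assms(3) by (simp add: allkeys_def)
next
  case (Suc n)
  have "allkeys (A (w + n * w)) (u * u ^ n)"
    by (rule allkeys_mult[OF assms(1) Suc]) (rule assms(2))
  then show ?case by simp
qed

lemma allkeys_prod:
  fixes f :: "'i \<Rightarrow> ('a::comm_monoid_add \<Rightarrow>\<^sub>0 bit)"
  assumes add: "\<And>k l m n. A m k \<Longrightarrow> A n l \<Longrightarrow> A (m + n) (k + l)" and z: "A 0 0"
    and h: "\<And>i. i \<in> S \<Longrightarrow> allkeys (A (w i)) (f i)"
  shows "allkeys (A (\<Sum>i\<in>S. w i)) (\<Prod>i\<in>S. f i)"
  using h
proof (induction S rule: infinite_finite_induct)
  case (infinite S) then show ?case using z by (simp add: allkeys_def)
next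
  case empty then show ?case using z by (simp add: allkeys_def)
next
  case (insert x F)
  have "allkeys (A (w x + (\<Sum>i\<in>F. w i))) (f x * (\<Prod>i\<in>F. f i))"
    by (rule allkeys_mult[OF insert.prems[of x] insert.IH]) (use insert.prems add in auto)
  then show ?case using insert by simp
qed

lemma keys_Del: "kys (Del k) = Delta k" by (simp add: Del_def)

lemma Del_keys_form: "(a, c) \<in> kys (Del k) \<Longrightarrow> \<exists>i\<le>k. a = xi i \<and> c = sm (2 ^ i) (xi (k - i))"
  by (auto simp: keys_Del Delta_def sm_def)

lemma weight_Del_key:
  assumes "i \<le> k" "k \<ge> 1"
  shows "weight (sm (2 ^ i) (xi (k - i))) = (if i = k then 0 else 2 ^ (k - 1))"
proof -
  have "i < k \<Longrightarrow> 2 ^ i * 2 ^ (k - i - 1) = (2::nat) ^ (k - 1)"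
    by (simp flip: power_add)
  then show ?thesis using assms by auto
qed

definition RW :: "nat \<Rightarrow> mon \<times> mon \<Rightarrow> bool" where
  "RW w k \<longleftrightarrow> snd k \<in> Amon \<and> weight (snd k) \<le> w"

lemma RW_add: "RW m k \<Longrightarrow> RW n l \<Longrightarrow> RW (m + n) (k + l)"
  by (auto simp: RW_def snd_plus_prod weight_add Amon_FS)

lemma RW_0: "RW 0 0" by (simp add: RW_def zero_prod_def)

lemma RW_Del: "k \<ge> 1 \<Longrightarrow> allkeys (RW (2 ^ (k - 1))) (Del k)"
  unfolding allkeys_def
proof
  fix q assume k: "k \<ge> 1" and q: "q \<in> kys (Del k)"
  obtain a c where ac: "q = (a, c)" by (cases q)
  then obtain i where i: "i \<le> k" "c = sm (2 ^ i) (xi (k - i))" using Del_keys_form q by blast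
  then show "RW (2 ^ (k - 1)) q" using ac weight_Del_key[OF i(1) k] by (simp add: RW_def)
qed

lemma K3: "e \<in> Amon \<Longrightarrow> allkeys (RW (weight e)) (CP e)"
proof -
  assume e: "e \<in> Amon"
  have "allkeys (RW (\<Sum>k\<in>{k. e k \<noteq> 0}. e k * 2 ^ (k - 1))) (\<Prod>k\<in>{k. e k \<noteq> 0}. Del k ^ e k)"
  proof (rule allkeys_prod[where A=RW, OF RW_add RW_0])
    fix k assume k: "k \<in> {k. e k \<noteq> 0}"
    then have "k \<ge> 1" using e by (cases k) (auto simp: Amon_def)
    then show "allkeys (RW (e k * 2 ^ (k - 1))) (Del k ^ e k)"
      by (intro allkeys_power_w[OF RW_Del RW_add RW_0])
  qed
  then show ?thesis by (simp add: CP_def weight_def)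
qed

lemma sm_xi_AA1: "sm c (xi m) \<in> AA1mon \<longleftrightarrow> (m = 1 \<longrightarrow> 4 dvd c) \<and> (m = 2 \<longrightarrow> 2 dvd c)"
  by (auto simp: AA1mon_def xi_apply)

lemma sm_xi_AA2: "sm c (xi m) \<in> AA2mon \<longleftrightarrow> (m = 1 \<longrightarrow> 8 dvd c) \<and> (m = 2 \<longrightarrow> 4 dvd c) \<and> (m = 3 \<longrightarrow> 2 dvd c)"
  by (auto simp: AA2mon_def xi_apply)

lemma pow_split: "d dvd n \<Longrightarrow> (u::R) ^ n = (u ^ d) ^ (n div d)"
  by (simp add: power_mult[symmetric])

definition RA1 :: "nat \<Rightarrow> mon \<times> mon \<Rightarrow> bool" where "RA1 w k \<longleftrightarrow> snd k \<in> AA1mon"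

lemma RA1_add: "RA1 m k \<Longrightarrow> RA1 n l \<Longrightarrow> RA1 (m + n) (k + l)"
  by (auto simp: RA1_def snd_plus_prod)

lemma RA1_0: "RA1 0 0" by (simp add: RA1_def zero_prod_def)

lemma dvd_pow2: "a \<le> b \<Longrightarrow> (2::nat) ^ a dvd 2 ^ b" by (simp add: le_imp_power_dvd)

lemma RA1_Delk: "k \<ge> 3 \<Longrightarrow> allkeys (RA1 w) (Del k)"
  unfolding allkeys_def
proof
  fix q assume k: "k \<ge> 3" and q: "q \<in> kys (Del k)"
  obtain a c where ac: "q = (a, c)" by (cases q)
  then obtain i where i: "i \<le> k" "c = sm (2 ^ i) (xi (k - i))" using Del_keys_form q by blast
  have "k - i = 1 \<Longrightarrow> (4::nat) dvd 2 ^ i" using dvd_pow2[of 2 i] i k by simp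
  moreover have "k - i = 2 \<Longrightarrow> (2::nat) dvd 2 ^ i" using dvd_pow2[of 1 i] i k by simp
  ultimately show "RA1 w q" using ac i by (simp add: RA1_def sm_xi_AA1)
qed

lemma RA1_Del1: "allkeys (RA1 w) (Del 1 ^ 4)"
proof -
  have "Del 1 ^ 4 = Del 1 ^ (2 ^ 2)" by simp
  also have "\<dots> = (\<Sum>i\<le>1. T (sm (2 ^ 2) (xi i)) (sm (2 ^ 2 * 2 ^ i) (xi (1 - i))))" by (rule Del_pow2)
  finally have e: "Del 1 ^ 4 = \<dots>" .
  show ?thesis unfolding e
  proof (rule allkeys_sum)
    fix i :: nat assume "i \<in> {..1}"
    then have "i = 0 \<or> i = 1" by auto
    then show "allkeys (RA1 w) (T (sm (2 ^ 2) (xi i)) (sm (2 ^ 2 * 2 ^ i) (xi (1 - i))))"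
      by (auto simp: RA1_def sm_xi_AA1)
  qed
qed

lemma RA1_Del2: "allkeys (RA1 w) (Del 2 ^ 2)"
proof -
  have "Del 2 ^ 2 = Del 2 ^ (2 ^ 1)" by simp
  also have "\<dots> = (\<Sum>i\<le>2. T (sm (2 ^ 1) (xi i)) (sm (2 ^ 1 * 2 ^ i) (xi (2 - i))))" by (rule Del_pow2)
  finally have e: "Del 2 ^ 2 = \<dots>" .
  show ?thesis unfolding e
  proof (rule allkeys_sum)
    fix i :: nat assume "i \<in> {..2}"
    then have "i = 0 \<or> i = 1 \<or> i = 2" by auto
    then show "allkeys (RA1 w) (T (sm (2 ^ 1) (xi i)) (sm (2 ^ 1 * 2 ^ i) (xi (2 - i))))"
      by (auto simp: RA1_def sm_xi_AA1)
  qed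
qed

lemma K2: "e \<in> AA1mon \<Longrightarrow> allkeys (RA1 0) (CP e)"
proof -
  assume e: "e \<in> AA1mon"
  have "allkeys (RA1 (\<Sum>k\<in>{k. e k \<noteq> 0}. 0)) (\<Prod>k\<in>{k. e k \<noteq> 0}. Del k ^ e k)"
  proof (rule allkeys_prod[where A=RA1, OF RA1_add RA1_0])
    fix k assume k: "k \<in> {k. e k \<noteq> 0}"
    then have "k \<ge> 1" using e by (cases k) (auto simp: AA1mon_def Amon_def)
    then have "k = 1 \<or> k = 2 \<or> k \<ge> 3" by auto
    then show "allkeys (RA1 0) (Del k ^ e k)"
    proof (elim disjE)
      assume k1: "k = 1"
      have "Del k ^ e k = (Del 1 ^ 4) ^ (e 1 div 4)" using e k1 by (simp add: AA1mon_def pow_split)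
      then show ?thesis using allkeys_power_w[OF RA1_Del1 RA1_add RA1_0] by (simp add: RA1_def allkeys_def)
    next
      assume k2: "k = 2"
      have "Del k ^ e k = (Del 2 ^ 2) ^ (e 2 div 2)" using e k2 by (simp add: AA1mon_def pow_split)
      then show ?thesis using allkeys_power_w[OF RA1_Del2 RA1_add RA1_0] by (simp add: RA1_def allkeys_def)
    next
      assume "k \<ge> 3"
      then show ?thesis using allkeys_power_w[OF RA1_Delk RA1_add RA1_0] by (simp add: RA1_def allkeys_def)
    qed
  qed
  then show ?thesis by (simp add: CP_def)
qed



section \<open>K1: coproducts of (A//A(2))_* monomials\<close>

definition RK :: "nat \<Rightarrow> mon \<times> mon \<Rightarrow> bool" where
  "RK w k \<longleftrightarrow> (fst k \<in> A2mon \<longrightarrow> snd k \<in> AA2mon \<and> weight (snd k) = w)"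

lemma RK_add: "RK m k \<Longrightarrow> RK n l \<Longrightarrow> RK (m + n) (k + l)"
  unfolding RK_def fst_plus_prod snd_plus_prod
  by (auto dest: A2mon_add_left A2mon_add_right simp: weight_add Amon_FS AA2_Amon)

lemma RK_0: "RK 0 0" by (simp add: RK_def zero_prod_def)

lemma RK_Delk: "k \<ge> 4 \<Longrightarrow> allkeys (RK (2 ^ (k - 1))) (Del k)"
  unfolding allkeys_def
proof
  fix q assume k: "k \<ge> 4" and q: "q \<in> kys (Del k)"
  obtain a c where ac: "q = (a, c)" by (cases q)
  then obtain i where i: "i \<le> k" "a = xi i" "c = sm (2 ^ i) (xi (k - i))" using Del_keys_form q by blast
  show "RK (2 ^ (k - 1)) q"
  proof (cases "i \<le> 3")
    case True
    have "k - i = 1 \<Longrightarrow> (8::nat) dvd 2 ^ i" using dvd_pow2[of 3 i] i k by simp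
    moreover have "k - i = 2 \<Longrightarrow> (4::nat) dvd 2 ^ i" using dvd_pow2[of 2 i] i k by simp
    moreover have "k - i = 3 \<Longrightarrow> (2::nat) dvd 2 ^ i" using dvd_pow2[of 1 i] i k by simp
    moreover have "weight c = 2 ^ (k - 1)" using weight_Del_key[OF i(1)] k True i by simp
    ultimately show ?thesis using ac i by (simp add: RK_def sm_xi_AA2)
  next
    case False
    then show ?thesis using ac i by (simp add: RK_def)
  qed
qed

lemma RK_Del_gen:
  assumes e: "Del k ^ (2 ^ r) = (\<Sum>i\<le>k. T (sm (2 ^ r) (xi i)) (sm (2 ^ r * 2 ^ i) (xi (k - i))))"
    and h: "\<And>i. i \<le> k \<Longrightarrow> RK w (sm (2 ^ r) (xi i), sm (2 ^ r * 2 ^ i) (xi (k - i)))"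
  shows "allkeys (RK w) (Del k ^ (2 ^ r))"
  unfolding e by (rule allkeys_sum) (use h in auto)

lemma RK_Del1: "allkeys (RK 8) (Del 1 ^ 8)"
proof -
  have "allkeys (RK 8) (Del 1 ^ (2 ^ 3))"
  proof (rule RK_Del_gen[OF Del_pow2])
    fix i :: nat assume "i \<le> 1"
    then have "i = 0 \<or> i = 1" by auto
    then show "RK 8 (sm (2 ^ 3) (xi i), sm (2 ^ 3 * 2 ^ i) (xi (1 - i)))"
      by (auto simp: RK_def xi_1)
  qed
  then show ?thesis by simp
qed

lemma RK_Del2: "allkeys (RK 8) (Del 2 ^ 4)"
proof -
  have "allkeys (RK 8) (Del 2 ^ (2 ^ 2))"
  proof (rule RK_Del_gen[OF Del_pow2])
    fix i :: nat assume "i \<le> 2"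
    then have "i = 0 \<or> i = 1 \<or> i = 2" by auto
    then show "RK 8 (sm (2 ^ 2) (xi i), sm (2 ^ 2 * 2 ^ i) (xi (2 - i)))"
      by (auto simp: RK_def xi_1 xi_2 xi_Suc0)
  qed
  then show ?thesis by simp
qed

lemma RK_Del3: "allkeys (RK 8) (Del 3 ^ 2)"
proof -
  have "allkeys (RK 8) (Del 3 ^ (2 ^ 1))"
  proof (rule RK_Del_gen[OF Del_pow2])
    fix i :: nat assume "i \<le> 3"
    then have "i = 0 \<or> i = 1 \<or> i = 2 \<or> i = 3" by auto
    then show "RK 8 (sm (2 ^ 1) (xi i), sm (2 ^ 1 * 2 ^ i) (xi (3 - i)))"
      by (auto simp: RK_def xi_1 xi_2 xi_3 xi_Suc0)
  qed
  then show ?thesis by simp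
qed

lemma K1: "m \<in> AA2mon \<Longrightarrow> allkeys (RK (weight m)) (CP m)"
proof -
  assume e: "m \<in> AA2mon"
  have "allkeys (RK (\<Sum>k\<in>{k. m k \<noteq> 0}. m k * 2 ^ (k - 1))) (\<Prod>k\<in>{k. m k \<noteq> 0}. Del k ^ m k)"
  proof (rule allkeys_prod[where A=RK, OF RK_add RK_0])
    fix k assume k: "k \<in> {k. m k \<noteq> 0}"
    then have "k \<ge> 1" using e by (cases k) (auto simp: AA2mon_def Amon_def)
    then have "k = 1 \<or> k = 2 \<or> k = 3 \<or> k \<ge> 4" by auto
    then show "allkeys (RK (m k * 2 ^ (k - 1))) (Del k ^ m k)"
    proof (elim disjE)
      assume k1: "k = 1"
      have d: "8 dvd m 1" using e by (simp add: AA2mon_def)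
      have p: "Del k ^ m k = (Del 1 ^ 8) ^ (m 1 div 8)" using d k1 by (simp add: pow_split)
      have w: "m 1 div 8 * 8 = m k * 2 ^ (k - 1)" using d k1 by simp
      have A: "allkeys (RK (m 1 div 8 * 8)) ((Del 1 ^ 8) ^ (m 1 div 8))"
        by (rule allkeys_power_w[OF RK_Del1 RK_add RK_0])
      from A show ?thesis by (simp only: w p)
    next
      assume k2: "k = 2"
      have d: "4 dvd m 2" using e by (simp add: AA2mon_def)
      have p: "Del k ^ m k = (Del 2 ^ 4) ^ (m 2 div 4)" using d k2 by (simp add: pow_split)
      have w: "m 2 div 4 * 8 = m k * 2 ^ (k - 1)" using d k2 by auto
      have A: "allkeys (RK (m 2 div 4 * 8)) ((Del 2 ^ 4) ^ (m 2 div 4))"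
        by (rule allkeys_power_w[OF RK_Del2 RK_add RK_0])
      from A show ?thesis by (simp only: w p)
    next
      assume k3: "k = 3"
      have d: "2 dvd m 3" using e by (simp add: AA2mon_def)
      have p: "Del k ^ m k = (Del 3 ^ 2) ^ (m 3 div 2)" using d k3 by (simp add: pow_split)
      have w: "m 3 div 2 * 8 = m k * 2 ^ (k - 1)" using d k3 by auto
      have A: "allkeys (RK (m 3 div 2 * 8)) ((Del 3 ^ 2) ^ (m 3 div 2))"
        by (rule allkeys_power_w[OF RK_Del3 RK_add RK_0])
      from A show ?thesis by (simp only: w p)
    next
      assume "k \<ge> 4"
      then show ?thesis using allkeys_power_w[OF RK_Delk RK_add RK_0] by simp
    qed
  qed
  then show ?thesis by (simp add: CP_def weight_def)
qed

section \<open>The decomposition tau\<close>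

lemma tau2_mk: "tau2 e = mk (e 1 mod 8) (e 2 mod 4) (e 3 mod 2)"
  by (auto simp: tau2_def mk_def fun_eq_iff)

lemma tau_split: "tau1 e + tau2 e = e"
  by (auto simp: tau1_def tau2_def fun_eq_iff)

lemma tau1_apply: "tau1 e 1 = 8 * (e 1 div 8)" "tau1 e 2 = 4 * (e 2 div 4)" "tau1 e 3 = 2 * (e 3 div 2)"
  "k \<noteq> 1 \<Longrightarrow> k \<noteq> 2 \<Longrightarrow> k \<noteq> 3 \<Longrightarrow> tau1 e k = e k"
  by (auto simp: tau1_def)

lemma tau1_AA2: "e \<in> Amon \<Longrightarrow> tau1 e \<in> AA2mon"
proof -
  assume a: "e \<in> Amon"
  have sub: "{k. tau1 e k \<noteq> 0} \<subseteq> {k. e k \<noteq> 0}" by (auto simp: tau1_def split: if_splits)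
  have fin: "finite {k. e k \<noteq> 0}" and z: "e 0 = 0" using a by (auto simp: Amon_def)
  have "finite {k. tau1 e k \<noteq> 0}" using finite_subset[OF sub fin] .
  moreover have "tau1 e 0 = 0" using z by (simp add: tau1_def)
  ultimately have "finite {k. tau1 e k \<noteq> 0}" "tau1 e 0 = 0" by auto
  then show ?thesis unfolding AA2mon_def Amon_def by (simp add: tau1_apply)
qed

lemma tau2_AA1: "e \<in> AA1mon \<Longrightarrow> tau2 e \<in> AA1mon"
  by (auto simp: tau2_mk AA1mon_def dvd_mod)

lemma weight_tau: "e \<in> Amon \<Longrightarrow> weight e = weight (tau1 e) + weight (tau2 e)"
  by (metis tau_split weight_add Amon_FS tau1_AA2 AA2_Amon mk_FS tau2_mk)

lemma degree_tau: "e \<in> Amon \<Longrightarrow> degree e = degree (tau1 e) + degree (tau2 e)"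
  by (metis tau_split degree_add Amon_FS tau1_AA2 AA2_Amon mk_FS tau2_mk)

lemma mod8_cases: "4 dvd (x::nat) \<Longrightarrow> x mod 8 = 0 \<or> x mod 8 = 4"
  by presburger

lemma mod4_cases: "2 dvd (x::nat) \<Longrightarrow> x mod 4 = 0 \<or> x mod 4 = 2"
  by presburger

lemma mod2_cases: "(x::nat) mod 2 = 0 \<or> x mod 2 = 1"
  by presburger

lemma weight_tau2_le: "e \<in> AA1mon \<Longrightarrow> weight (tau2 e) \<le> 12"
  using mod8_cases[of "e 1"] mod4_cases[of "e 2"] mod2_cases[of "e 3"]
  by (auto simp: tau2_mk AA1mon_def)

definition top :: mon where "top = mk 4 2 1"

lemma weight_tau2_12: "e \<in> AA1mon \<Longrightarrow> weight (tau2 e) = 12 \<longleftrightarrow> tau2 e = top"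
  using mod8_cases[of "e 1"] mod4_cases[of "e 2"] mod2_cases[of "e 3"]
  by (auto simp: tau2_mk AA1mon_def top_def)

lemma tau1_add_AA2: "m \<in> AA2mon \<Longrightarrow> tau1 (m + c) = m + tau1 c"
  by (auto simp: tau1_def fun_eq_iff AA2mon_def elim!: dvdE)

lemma tau2_add_AA2: "m \<in> AA2mon \<Longrightarrow> tau2 (m + c) = tau2 c"
  by (auto simp: tau2_def fun_eq_iff AA2mon_def elim!: dvdE)

lemma tau1_AA2_id: "m \<in> AA2mon \<Longrightarrow> tau1 m = m"
  by (auto simp: tau1_def fun_eq_iff AA2mon_def dvd_mult_div_cancel)

lemma tau2_AA2: "m \<in> AA2mon \<Longrightarrow> tau2 m = 0"
  by (auto simp: tau2_def fun_eq_iff AA2mon_def dvd_imp_mod_0)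

lemma tau1_top [simp]: "tau1 top = 0"
  by (auto simp: tau1_def top_def fun_eq_iff mk_def)

lemma tau2_top [simp]: "tau2 top = top"
  by (simp add: tau2_mk top_def)

lemma top_AA1 [simp]: "top \<in> AA1mon" by (simp add: top_def)
lemma top_Amon [simp]: "top \<in> Amon" by (simp add: top_def)
lemma weight_top [simp]: "weight top = 12" by (simp add: top_def)
lemma degree_top [simp]: "degree top = 17" by (simp add: top_def)

lemma weight_AA2_dvd: "m \<in> AA2mon \<Longrightarrow> 8 dvd weight m"
proof -
  assume m: "m \<in> AA2mon"
  have "8 dvd (\<Sum>k\<in>{k. m k \<noteq> 0}. m k * 2 ^ (k - 1))"
  proof (rule dvd_sum)
    fix k assume "k \<in> {k. m k \<noteq> 0}"
    then have "k \<ge> 1" using m by (cases k) (auto simp: AA2mon_def Amon_def)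
    then have "k = 1 \<or> k = 2 \<or> k = 3 \<or> k \<ge> 4" by auto
    then show "8 dvd m k * 2 ^ (k - 1)"
    proof (elim disjE)
      assume "k \<ge> 4"
      then have "(8::nat) dvd 2 ^ (k - 1)" using dvd_pow2[of 3 "k - 1"] by simp
      then show ?thesis by simp
    next
      assume "k = 1" then show ?thesis using m by (simp add: AA2mon_def)
    next
      assume "k = 2"
      then have "m k * 2 ^ (k - 1) = m 2 * 2" by simp
      moreover have "8 dvd m 2 * 2" using m by (auto simp: AA2mon_def elim!: dvdE)
      ultimately show ?thesis by simp
    next
      assume "k = 3"
      then have "m k * 2 ^ (k - 1) = m 3 * 4" by simp
      moreover have "8 dvd m 3 * 4" using m by (auto simp: AA2mon_def elim!: dvdE)
      ultimately show ?thesis by simp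
    qed
  qed
  then show ?thesis by (simp add: weight_def)
qed

lemma M2_iff: "m \<in> M2 k \<longleftrightarrow> m \<in> AA2mon \<and> weight m = 8 * k"
  by (simp add: M2_def)

lemma N1_iff: "e \<in> N1 j \<longleftrightarrow> e \<in> AA1mon \<and> weight e \<le> 4 * j"
  by (simp add: N1_def)

lemma Fbasis_iff: "e \<in> Fbasis j \<longleftrightarrow> e \<in> AA1mon \<and> 8 * j \<le> weight (tau1 e)"
proof
  assume "e \<in> Fbasis j"
  then show "e \<in> AA1mon \<and> 8 * j \<le> weight (tau1 e)" by (auto simp: Fbasis_def M2_iff)
next
  assume h: "e \<in> AA1mon \<and> 8 * j \<le> weight (tau1 e)"
  then have t: "tau1 e \<in> AA2mon" using tau1_AA2 AA1_Amon by blast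
  then obtain k where k: "weight (tau1 e) = 8 * k" using weight_AA2_dvd by (blast elim: dvdE)
  then have "k \<ge> j" using h by simp
  then show "e \<in> Fbasis j" using h t k by (auto simp: Fbasis_def M2_iff)
qed

section \<open>F^j is a subcomodule\<close>

lemma keys_pp_prod:
  assumes "q \<in> kys (pp (u * v))"
  obtains k l where "q = k + l" "k \<in> kys u" "l \<in> kys v" "fst k \<in> A2mon" "fst l \<in> A2mon"
proof -
  have "q \<in> kys (u * v)" "fst q \<in> A2mon" using assms by (auto simp: keys_pp)
  then obtain k l where "q = k + l" "k \<in> kys u" "l \<in> kys v" by (metis keys_mult_prop)
  moreover have s: "fst k + fst l \<in> A2mon" using \<open>fst q \<in> A2mon\<close> arg_cong[OF calculation(1), of fst]
    by simp
  ultimately show ?thesis using that A2mon_add_left[OF s] A2mon_add_right[OF s] by blast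
qed

lemma subcomod:
  assumes b: "b \<in> Fbasis j" and q: "(a, c) \<in> kys (pp (CP b))"
  shows "c \<in> Fbasis j"
proof -
  have bA: "b \<in> AA1mon" using b by (simp add: Fbasis_iff)
  let ?m = "tau1 b" and ?t = "tau2 b"
  have mA: "?m \<in> AA2mon" using tau1_AA2 AA1_Amon bA by blast
  have tA: "?t \<in> AA1mon" using tau2_AA1 bA by blast
  have "CP b = CP (?m + ?t)" by (simp add: tau_split)
  also have "\<dots> = CP ?m * CP ?t"
    by (rule CP_add) (use mA tA in \<open>auto intro: Amon_FS AA2_Amon AA1_Amon\<close>)
  finally have "CP b = CP ?m * CP ?t" .
  then have q': "(a, c) \<in> kys (pp (CP ?m * CP ?t))" using q by simp
  obtain k l where kl: "(a, c) = k + l" "k \<in> kys (CP ?m)" "l \<in> kys (CP ?t)" "fst k \<in> A2mon" "fst l \<in> A2mon"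
    by (rule keys_pp_prod[OF q'])
  have k1: "snd k \<in> AA2mon" "weight (snd k) = weight ?m"
    using K1[OF mA] kl by (auto simp: allkeys_def RK_def)
  have l1: "snd l \<in> AA1mon" using K2[OF tA] kl by (auto simp: allkeys_def RA1_def)
  have c: "c = snd k + snd l" using arg_cong[OF kl(1), of snd] by simp
  have "tau1 c = snd k + tau1 (snd l)" using c tau1_add_AA2[OF k1(1)] by simp
  then have "weight (tau1 c) = weight (snd k) + weight (tau1 (snd l))"
    using k1(1) l1 by (simp add: weight_add Amon_FS AA2_Amon tau1_AA2 AA1_Amon)
  moreover have "8 * j \<le> weight ?m" using b by (simp add: Fbasis_iff)
  moreover have "c \<in> AA1mon" using c k1 l1 AA2_AA1 by blast
  ultimately show ?thesis using k1 by (simp add: Fbasis_iff)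
qed



lemma sum_atMost1: "(\<Sum>i\<le>(1::nat). f i) = f 0 + f 1"
proof -
  have "{..(1::nat)} = {0, 1}" by auto
  then show ?thesis by simp
qed

lemma sum_atMost2: "(\<Sum>i\<le>(2::nat). f i) = f 0 + f 1 + f 2"
proof -
  have "{..(2::nat)} = {0, 1, 2}" by auto
  then show ?thesis by (simp add: ac_simps)
qed

lemma sum_atMost3: "(\<Sum>i\<le>(3::nat). f i) = f 0 + f 1 + f 2 + f 3"
proof -
  have "{..(3::nat)} = {0, 1, 2, 3}" by auto
  then show ?thesis by (simp add: ac_simps)
qed

lemmas xi_simps = xi_1 xi_2 xi_3 xi_Suc0

lemma Del1_4: "Del 1 ^ 4 = T 0 (mk 4 0 0) + T (mk 4 0 0) 0"
  using Del_pow2[of 1 2] by (simp add: sum_atMost1 xi_simps)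

lemma Del1_8: "Del 1 ^ 8 = T 0 (mk 8 0 0) + T (mk 8 0 0) 0"
  using Del_pow2[of 1 3] by (simp add: sum_atMost1 xi_simps)

lemma Del2_2: "Del 2 ^ 2 = T 0 (mk 0 2 0) + T (mk 2 0 0) (mk 4 0 0) + T (mk 0 2 0) 0"
  using Del_pow2[of 2 1] by (simp add: sum_atMost2 xi_simps)

lemma Del2_4: "Del 2 ^ 4 = T 0 (mk 0 4 0) + T (mk 4 0 0) (mk 8 0 0) + T (mk 0 4 0) 0"
  using Del_pow2[of 2 2] by (simp add: sum_atMost2 xi_simps)

lemma Del3_1: "Del 3 = T 0 (mk 0 0 1) + T (mk 1 0 0) (mk 0 2 0) + T (mk 0 1 0) (mk 4 0 0) + T (mk 0 0 1) 0"
  using Del_pow2[of 3 0] by (simp add: sum_atMost3 xi_simps)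

lemma Del3_2: "Del 3 ^ 2 = T 0 (mk 0 0 2) + T (mk 2 0 0) (mk 0 4 0) + T (mk 0 2 0) (mk 8 0 0) + T (mk 0 0 2) 0"
  using Del_pow2[of 3 1] by (simp add: sum_atMost3 xi_simps)

section \<open>The map x \<mapsto> xibar_1^(N - 2 wt x) * sigma(x)\<close>

definition gN :: "nat \<Rightarrow> mon \<Rightarrow> mon" where
  "gN N x = mk (N - 2 * weight x) 0 0 + sh x"

definition psi :: "nat \<Rightarrow> mon \<times> mon \<Rightarrow> mon \<times> mon" where
  "psi N k = (fst k, gN N (snd k))"

lemma pp_single: "pp (sng k 1) = (if fst k \<in> A2mon then sng k 1 else 0)"
  using pp_T[of "fst k" "snd k"] by simp

lemma pp_Lmap:
  assumes "\<And>k. fst (\<phi> k) = fst k"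
  shows "pp (Lmap \<phi> u) = Lmap \<phi> (pp u)"
proof -
  have "pp (Lmap \<phi> u) = (\<Sum>k\<in>kys u. pp (sng (\<phi> k) 1))" by (simp add: Lmap_eq pp_sum)
  also have "\<dots> = (\<Sum>k\<in>kys u. Lmap \<phi> (pp (sng k 1)))"
    by (rule sum.cong) (auto simp: pp_single assms Lmap_def)
  also have "\<dots> = Lmap \<phi> (pp u)"
    by (subst (2) pm_as_sum[of u]) (simp add: pp_sum Lmap_sum)
  finally show ?thesis .
qed

lemma psi_fst [simp]: "fst (psi N k) = fst k" by (simp add: psi_def)

lemma weight_AA1_dvd: "x \<in> AA1mon \<Longrightarrow> 4 dvd weight x"
proof -
  assume x: "x \<in> AA1mon"
  have "4 dvd weight (tau1 x)" using weight_AA2_dvd[OF tau1_AA2[OF AA1_Amon[OF x]]] by (auto elim!: dvdE)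
  moreover have "4 dvd weight (tau2 x)"
    using mod8_cases[of "x 1"] mod4_cases[of "x 2"] mod2_cases[of "x 3"] x
    by (auto simp: tau2_mk AA1mon_def)
  ultimately show ?thesis by (simp add: weight_tau[OF AA1_Amon[OF x]])
qed

lemma psi_add:
  assumes "snd k \<in> Amon" "snd l \<in> Amon" "2 * weight (snd k) \<le> Na" "2 * weight (snd l) \<le> Nb"
  shows "psi (Na + Nb) (k + l) = psi Na k + psi Nb l"
proof -
  have w: "weight (snd k + snd l) = weight (snd k) + weight (snd l)"
    using assms by (simp add: weight_add Amon_FS)
  have "Na + Nb - 2 * weight (snd k + snd l) = (Na - 2 * weight (snd k)) + (Nb - 2 * weight (snd l))"
    using assms w by simp
  then show ?thesis
    by (simp add: psi_def gN_def pair_plus sh_add w ac_simps)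
qed

lemma Lmap_psi_mult:
  assumes "allkeys (RW w1) u" "allkeys (RW w2) v" "2 * w1 \<le> Na" "2 * w2 \<le> Nb"
  shows "Lmap (psi (Na + Nb)) (u * v) = Lmap (psi Na) u * Lmap (psi Nb) v"
proof (rule Lmap_mult)
  fix k l assume "k \<in> kys u" "l \<in> kys v"
  then have "RW w1 k" "RW w2 l" using assms by (auto simp: allkeys_def)
  then show "psi (Na + Nb) (k + l) = psi Na k + psi Nb l"
    using assms by (intro psi_add) (auto simp: RW_def)
qed

lemma Lmap_T: "Lmap \<phi> (T a c) = sng (\<phi> (a, c)) 1" by simp



lemma pp_Del: "m \<ge> 3 \<Longrightarrow> pp (Del m) = (\<Sum>i\<le>3. T (xi i) (sm (2 ^ i) (xi (m - i))))"
proof -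
  assume m: "m \<ge> 3"
  have "pp (Del m) = (\<Sum>i\<le>m. if i \<le> 3 then T (xi i) (sm (2 ^ i) (xi (m - i))) else 0)"
    by (simp add: Del_sum pp_sum pp_T)
  also have "\<dots> = (\<Sum>i\<in>{i \<in> {..m}. i \<le> 3}. T (xi i) (sm (2 ^ i) (xi (m - i))))"
    by (subst sum.inter_filter) auto
  also have "{i \<in> {..m}. i \<le> 3} = {..3}" using m by auto
  finally show ?thesis .
qed

lemma baseA: "pp (CP (sh (mk 4 0 0))) = Lmap (psi 8) (pp (CP (mk 4 0 0)))"
  by (simp add: sh_mk0 CP_mk Del1_4 Del2_4 pp_add pp_T Lmap_add psi_def gN_def ac_simps)

lemma baseB: "pp (CP (sh (mk 0 2 0))) = Lmap (psi 8) (pp (CP (mk 0 2 0)))"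
  by (simp add: sh_mk0 CP_mk Del2_2 Del3_2 pp_add pp_T Lmap_add psi_def gN_def sh_mk0 ac_simps)

lemma gN_key:
  assumes "i \<le> 3" "3 \<le> k"
  shows "gN (2 ^ k) (sm (2 ^ i) (xi (k - i))) = sm (2 ^ i) (xi (Suc k - i))"
proof (cases "i < k")
  case True
  have w: "weight (sm (2 ^ i) (xi (k - i))) = 2 ^ (k - 1)"
    using weight_Del_key[of i k] True assms by simp
  have "2 * 2 ^ (k - 1) = (2::nat) ^ k" using assms by (cases k) auto
  then have z: "2 ^ k - 2 * weight (sm (2 ^ i) (xi (k - i))) = 0" using w by simp
  have "sh (sm (2 ^ i) (xi (k - i))) = sm (2 ^ i) (xi (Suc (k - i)))" using True by (intro sh_sm_xi) simp
  moreover have "Suc (k - i) = Suc k - i" using True by simp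
  ultimately show ?thesis using z by (simp add: gN_def)
next
  case False
  then have "i = 3" "k = 3" using assms by auto
  then show ?thesis by (simp add: gN_def xi_simps)
qed

lemma baseC: "k \<ge> 3 \<Longrightarrow> pp (CP (sh (xi k))) = Lmap (psi (2 ^ k)) (pp (CP (xi k)))"
proof -
  assume k: "k \<ge> 3"
  have "sh (xi k) = xi (Suc k)" using sh_sm_xi[of k 1] k by simp
  then have "pp (CP (sh (xi k))) = (\<Sum>i\<le>3. T (xi i) (sm (2 ^ i) (xi (Suc k - i))))"
    using k by (simp add: CP_xi pp_Del)
  also have "\<dots> = (\<Sum>i\<le>3. Lmap (psi (2 ^ k)) (T (xi i) (sm (2 ^ i) (xi (k - i)))))"
    by (rule sum.cong) (use k gN_key in \<open>auto simp: psi_def\<close>)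
  also have "\<dots> = Lmap (psi (2 ^ k)) (pp (CP (xi k)))"
    using k by (simp add: CP_xi pp_Del Lmap_sum)
  finally show ?thesis .
qed

definition G1 :: "mon \<Rightarrow> bool" where
  "G1 g \<longleftrightarrow> g = mk 4 0 0 \<or> g = mk 0 2 0 \<or> (\<exists>k\<ge>3. g = xi k)"

lemma G1_props:
  assumes "G1 g"
  shows "g \<in> AA1mon" "0 < weight g" "8 dvd 2 * weight g"
    "pp (CP (sh g)) = Lmap (psi (2 * weight g)) (pp (CP g))"
proof -
  have "g \<in> AA1mon \<and> 0 < weight g \<and> 8 dvd 2 * weight g \<and>
    pp (CP (sh g)) = Lmap (psi (2 * weight g)) (pp (CP g))"
    using assms unfolding G1_def
  proof (elim disjE exE conjE)
    assume "g = mk 4 0 0" then show ?thesis using baseA by simp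
  next
    assume "g = mk 0 2 0" then show ?thesis using baseB by simp
  next
    fix k assume k: "3 \<le> k" and g: "g = xi k"
    have w: "weight (xi k) = 2 ^ (k - 1)" using weight_sm_xi[of 1 k] k by simp
    have p: "2 * 2 ^ (k - 1) = (2::nat) ^ k" using k by (cases k) auto
    have "(8::nat) dvd 2 ^ k" using dvd_pow2[of 3 k] k by simp
    moreover have "xi k \<in> AA1mon" using sm_xi_AA1[of 1 k] k by simp
    ultimately show ?thesis using g w p baseC[OF k] by simp
  qed
  then show "g \<in> AA1mon" "0 < weight g" "8 dvd 2 * weight g"
    "pp (CP (sh g)) = Lmap (psi (2 * weight g)) (pp (CP g))" by auto
qed

lemma Amon_upd: "x \<in> Amon \<Longrightarrow> k \<noteq> 0 \<Longrightarrow> x(k := v) \<in> Amon"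
proof -
  assume a: "x \<in> Amon" "k \<noteq> 0"
  have "{n. (x(k := v)) n \<noteq> 0} \<subseteq> insert k {n. x n \<noteq> 0}" by auto
  moreover have "finite (insert k {n. x n \<noteq> 0})" using a by (simp add: Amon_def)
  ultimately have "finite {n. (x(k := v)) n \<noteq> 0}" by (rule finite_subset)
  then show ?thesis using a by (simp add: Amon_def)
qed

lemma AA1_decomp:
  assumes x: "x \<in> AA1mon" "x \<noteq> 0"
  shows "\<exists>x' g. x = x' + g \<and> x' \<in> AA1mon \<and> G1 g"
proof -
  obtain k where k: "x k \<noteq> 0" using x by (auto simp: fun_eq_iff)
  have xA: "x \<in> Amon" using x by (simp add: AA1mon_def)
  have "k \<noteq> 0"
  proof
    assume "k = 0" then show False using k xA by (simp add: Amon_def)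
  qed
  then have "k = 1 \<or> k = 2 \<or> k \<ge> 3" by auto
  then show ?thesis
  proof (elim disjE)
    assume k1: "k = 1"
    have d: "4 dvd x 1" using x by (simp add: AA1mon_def)
    then have ge: "x 1 \<ge> 4" using k k1 by (auto elim!: dvdE)
    let ?x' = "x(1 := x 1 - 4)"
    have "x = ?x' + mk 4 0 0" using ge by (auto simp: fun_eq_iff mk_def)
    moreover have "?x' \<in> AA1mon" using x d Amon_upd[OF xA, of 1] by (auto simp: AA1mon_def dvd_diff_nat)
    ultimately show ?thesis by (auto simp: G1_def)
  next
    assume k2: "k = 2"
    have d: "2 dvd x 2" using x by (simp add: AA1mon_def)
    then have ge: "x 2 \<ge> 2" using k k2 by (auto elim!: dvdE)
    let ?x' = "x(2 := x 2 - 2)"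
    have "x = ?x' + mk 0 2 0" using ge by (auto simp: fun_eq_iff mk_def)
    moreover have "?x' \<in> AA1mon" using x d Amon_upd[OF xA, of 2] by (auto simp: AA1mon_def dvd_diff_nat)
    ultimately show ?thesis by (auto simp: G1_def)
  next
    assume k3: "k \<ge> 3"
    let ?x' = "x(k := x k - 1)"
    have "x = ?x' + xi k" using k k3 by (auto simp: fun_eq_iff xi_apply)
    moreover have "?x' \<in> AA1mon" using x k3 Amon_upd[OF xA, of k] by (auto simp: AA1mon_def)
    ultimately show ?thesis using k3 by (auto simp: G1_def)
  qed
qed

lemma gN_Amon [simp]: "x \<in> Amon \<Longrightarrow> gN N x \<in> Amon"
  by (simp add: gN_def Amon_add)

lemma pp_T0_power: "T 0 c ^ n = T 0 (sm n c)"
  using T_power[of 0 c n] by simp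

theorem lemmaD:
  assumes "x \<in> AA1mon" "8 dvd N" "2 * weight x \<le> N"
  shows "pp (CP (gN N x)) = Lmap (psi N) (pp (CP x))"
  using assms
proof (induction "weight x" arbitrary: x N rule: less_induct)
  case less
  show ?case
  proof (cases "x = 0")
    case True
    obtain p where p: "N = 8 * p" using less.prems by (auto elim!: dvdE)
    have "CP (gN N x) = (Del 1 ^ 8) ^ p" using True p by (simp add: gN_def CP_mk power_mult)
    then have "pp (CP (gN N x)) = pp ((pp (Del 1 ^ 8)) ^ p)" by (simp only: pp_power[of "Del 1 ^ 8" p])
    also have "\<dots> = T 0 (mk N 0 0)" using p by (simp add: Del1_8 pp_add pp_T pp_T0_power mult.commute)
    finally show ?thesis using True by (simp add: one_T pp_T psi_def gN_def)
  next
    case False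
    obtain x' g where d: "x = x' + g" "x' \<in> AA1mon" "G1 g" using AA1_decomp[OF less.prems(1) False] by blast
    note G = G1_props[OF d(3)]
    have FS: "x' \<in> FS" "g \<in> FS" using d(2) G(1) by (auto intro: Amon_FS AA1_Amon)
    have wx: "weight x = weight x' + weight g" using d(1) FS by (simp add: weight_add)
    define N' where "N' = N - 2 * weight g"
    have N': "N = N' + 2 * weight g" "2 * weight x' \<le> N'" using less.prems(3) wx by (auto simp: N'_def)
    have N'8: "8 dvd N'" using less.prems(2) G(3) by (simp add: N'_def dvd_diff_nat)
    have IH: "pp (CP (gN N' x')) = Lmap (psi N') (pp (CP x'))"
      by (rule less.hyps) (use wx G(2) d(2) N'8 N' in auto)
    have g: "gN N x = gN N' x' + sh g"
      using N' wx by (simp add: gN_def d(1) sh_add ac_simps)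
    have CPs: "CP (gN N x) = CP (gN N' x') * CP (sh g)"
      unfolding g by (rule CP_add) (use d(2) G(1) in \<open>auto intro!: Amon_FS AA1_Amon sh_Amon gN_Amon\<close>)
    have "pp (CP (gN N x)) = pp (pp (CP (gN N' x')) * pp (CP (sh g)))"
      unfolding CPs by (rule pp_mult)
    also have "\<dots> = pp (Lmap (psi N') (pp (CP x')) * Lmap (psi (2 * weight g)) (pp (CP g)))"
      using IH G(4) by simp
    also have "Lmap (psi N') (pp (CP x')) * Lmap (psi (2 * weight g)) (pp (CP g))
        = Lmap (psi N) (pp (CP x') * pp (CP g))"
    proof -
      have a1: "allkeys (RW (weight x')) (pp (CP x'))"
        unfolding pp_def by (rule allkeys_Filt) (rule K3, use d(2) in \<open>simp add: AA1_Amon\<close>)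
      have a2: "allkeys (RW (weight g)) (pp (CP g))"
        unfolding pp_def by (rule allkeys_Filt) (rule K3, use G(1) in \<open>simp add: AA1_Amon\<close>)
      show ?thesis using Lmap_psi_mult[OF a1 a2 N'(2), of "2 * weight g"] N'(1) by simp
    qed
    also have "pp (Lmap (psi N) (pp (CP x') * pp (CP g))) = Lmap (psi N) (pp (pp (CP x') * pp (CP g)))"
      by (rule pp_Lmap) simp
    also have "pp (pp (CP x') * pp (CP g)) = pp (CP x)"
      using d(1) FS by (simp add: CP_add pp_mult[symmetric])
    finally show ?thesis .
  qed
qed



section \<open>The coproduct of the top class\<close>

lemma CP_top: "CP top = (T 0 (mk 4 0 0) + T (mk 4 0 0) 0) *
   (T 0 (mk 0 2 0) + T (mk 2 0 0) (mk 4 0 0) + T (mk 0 2 0) 0) *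
   (T 0 (mk 0 0 1) + T (mk 1 0 0) (mk 0 2 0) + T (mk 0 1 0) (mk 4 0 0) + T (mk 0 0 1) 0)"
  by (simp add: top_def CP_mk Del1_4 Del2_2 Del3_1)

lemma lkp_CP_top: "lkp (CP top) (a, top) = (if a = 0 then 1 else 0)"
  unfolding CP_top by (simp add: algebra_simps T_mult lookup_add lookup_single top_def when_def)

lemma V_top: "(a, top) \<notin> kys (CP top + T 0 top)"
  by (simp add: in_keys_iff lookup_add lkp_CP_top lookup_single when_def)

definition SelW :: "nat \<Rightarrow> mon \<Rightarrow> bool" where
  "SelW w c \<longleftrightarrow> c \<in> AA1mon \<and> tau2 c = top \<and> weight (tau1 c) = w"

lemma mult_T0: "u * T 0 t = Lmap (\<lambda>k. (fst k, snd k + t)) u"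
proof -
  have "u * T 0 t = (\<Sum>k\<in>kys u. sng k 1) * T 0 t" by (simp flip: pm_as_sum)
  also have "\<dots> = (\<Sum>k\<in>kys u. sng (fst k, snd k + t) 1)"
    by (simp add: sum_distrib_right mult_single plus_prod_def)
  also have "\<dots> = Lmap (\<lambda>k. (fst k, snd k + t)) u" by (simp add: Lmap_eq)
  finally show ?thesis .
qed

lemma keys_sum_sub: "kys (sum (f :: 'i \<Rightarrow> 'a \<Rightarrow>\<^sub>0 bit) I) \<subseteq> (\<Union>i\<in>I. kys (f i))"
proof (induction I rule: infinite_finite_induct)
  case (insert x F)
  then show ?case using keys_add[of "f x" "sum f F"] by auto
qed auto

lemma keys_Lmap: "kys (Lmap \<phi> u) \<subseteq> \<phi> ` kys u"
  using keys_sum_sub[of "\<lambda>k. sng (\<phi> k) 1" "kys u"] by (auto simp: Lmap_eq)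

lemma tau2_big: "c \<in> AA1mon \<Longrightarrow> 8 < weight (tau2 c) \<Longrightarrow> tau2 c = top"
  using mod8_cases[of "c 1"] mod4_cases[of "c 2"] mod2_cases[of "c 3"]
  by (auto simp: tau2_mk AA1mon_def top_def)

lemma tau2_dvd4: "c \<in> AA1mon \<Longrightarrow> 4 dvd weight (tau2 c)"
  using mod8_cases[of "c 1"] mod4_cases[of "c 2"] mod2_cases[of "c 3"]
  by (auto simp: tau2_mk AA1mon_def)

lemma Sel_iff:
  assumes j: "j \<ge> 1" and c: "c \<in> AA1mon"
  shows "(c \<notin> Fbasis j \<and> 8 * j < weight c) \<longleftrightarrow> SelW (8 * (j - 1)) c"
proof -
  have cA: "c \<in> Amon" using c by (simp add: AA1mon_def)
  have wc: "weight c = weight (tau1 c) + weight (tau2 c)" by (rule weight_tau[OF cA])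
  obtain p where p: "weight (tau1 c) = 8 * p" using weight_AA2_dvd[OF tau1_AA2[OF cA]] by (auto elim!: dvdE)
  have t2: "weight (tau2 c) \<le> 12" using weight_tau2_le[OF c] .
  show ?thesis
  proof
    assume h: "c \<notin> Fbasis j \<and> 8 * j < weight c"
    then have "8 * p < 8 * j" using c p by (simp add: Fbasis_iff)
    moreover have "8 * j < 8 * p + weight (tau2 c)" using h wc p by simp
    ultimately have pj: "p = j - 1" "8 < weight (tau2 c)" using t2 by auto
    then show "SelW (8 * (j - 1)) c" using c p tau2_big[OF c] by (simp add: SelW_def)
  next
    assume "SelW (8 * (j - 1)) c"
    then have "weight (tau1 c) = 8 * (j - 1)" "tau2 c = top" by (auto simp: SelW_def)
    then show "c \<notin> Fbasis j \<and> 8 * j < weight c" using wc j c by (auto simp: Fbasis_iff)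
  qed
qed

lemma lemmaF:
  assumes m: "m \<in> AA2mon"
  shows "Filt (\<lambda>k. SelW (weight m) (snd k)) (pp (CP (m + top)))
         = Lmap (\<lambda>k. (fst k, snd k + top)) (pp (CP m))"
proof -
  let ?V = "CP top + T 0 top"
  let ?S = "\<lambda>k. SelW (weight m) (snd k)"
  let ?sh = "\<lambda>k::mon \<times> mon. (fst k, snd k + top)"
  have mA: "m \<in> Amon" using m by (simp add: AA2mon_def)
  have CPt: "T 0 top + ?V = CP top" by (simp add: ac_simps)
  have "CP (m + top) = CP m * CP top" by (rule CP_add) (use mA in \<open>auto intro: Amon_FS\<close>)
  also have "\<dots> = CP m * (T 0 top + ?V)" by (simp only: CPt)
  also have "\<dots> = CP m * T 0 top + CP m * ?V" by (rule distrib_left)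
  finally have "pp (CP (m + top)) = pp (CP m * T 0 top) + pp (CP m * ?V)"
    by (simp only: pp_add)
  moreover have "pp (CP m * T 0 top) = Lmap ?sh (pp (CP m))"
  proof -
    have "pp (CP m * T 0 top) = pp (pp (CP m) * T 0 top)" by (rule pp_mult1)
    also have "\<dots> = pp (Lmap ?sh (pp (CP m)))" by (simp only: mult_T0)
    also have "\<dots> = Lmap ?sh (pp (CP m))" by (subst pp_Lmap) auto
    finally show ?thesis .
  qed
  moreover have "Filt ?S (Lmap ?sh (pp (CP m))) = Lmap ?sh (pp (CP m))"
  proof (rule Filt_id_if)
    fix q assume "q \<in> kys (Lmap ?sh (pp (CP m)))"
    then have "q \<in> ?sh ` kys (pp (CP m))" by (rule subsetD[OF keys_Lmap])
    then obtain k where k: "k \<in> kys (pp (CP m))" "q = ?sh k" by (rule imageE) simp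
    then have "fst k \<in> A2mon" "k \<in> kys (CP m)" by (auto simp: keys_pp)
    then have s: "snd k \<in> AA2mon" "weight (snd k) = weight m"
      using K1[OF m] by (auto simp: allkeys_def RK_def)
    have "tau1 (snd k + top) = snd k" using tau1_add_AA2[OF s(1), of top] by simp
    moreover have "tau2 (snd k + top) = top" using tau2_add_AA2[OF s(1), of top] by simp
    moreover have "snd k + top \<in> AA1mon" using s(1) AA2_AA1 by auto
    ultimately show "?S q" using k s by (simp add: SelW_def)
  qed
  moreover have "Filt ?S (pp (CP m * ?V)) = 0"
  proof (rule Filt_zero_if)
    fix q assume q: "q \<in> kys (pp (CP m * ?V))"
    obtain k l where kl: "q = k + l" "k \<in> kys (CP m)" "l \<in> kys ?V" "fst k \<in> A2mon" "fst l \<in> A2mon"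
      by (rule keys_pp_prod[OF q])
    have s: "snd k \<in> AA2mon" "weight (snd k) = weight m"
      using K1[OF m] kl by (auto simp: allkeys_def RK_def)
    have l1: "l \<in> kys (CP top) \<or> l = (0, top)" using kl(3) keys_add[of "CP top" "T 0 top"] by auto
    have lA: "snd l \<in> AA1mon" using l1 K2[OF top_AA1] by (auto simp: allkeys_def RA1_def)
    have lt: "snd l \<noteq> top" using V_top[of "fst l"] kl(3) by (cases l) auto
    have sq: "snd q = snd k + snd l" using kl(1) by simp
    show "\<not> ?S q"
    proof
      assume "?S q"
      then have h: "tau2 (snd q) = top" "weight (tau1 (snd q)) = weight m" by (auto simp: SelW_def)
      have "tau2 (snd l) = top" using h(1) sq tau2_add_AA2[OF s(1)] by simp
      moreover have "tau1 (snd q) = snd k + tau1 (snd l)" using sq tau1_add_AA2[OF s(1)] by simp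
      then have "weight (tau1 (snd q)) = weight (snd k) + weight (tau1 (snd l))"
        using s(1) lA by (simp add: weight_add Amon_FS AA2_Amon tau1_AA2 AA1_Amon)
      then have "weight (tau1 (snd l)) = 0" using h(2) s(2) by simp
      then have "tau1 (snd l) = 0" using weight_eq_0 tau1_AA2 AA2_Amon AA1_Amon lA by blast
      ultimately have "snd l = top" using tau_split[of "snd l"] by simp
      then show False using lt by simp
    qed
  qed
  ultimately show ?thesis by (simp add: Filt_add)
qed



definition unsh :: "mon \<Rightarrow> mon" where "unsh m = (\<lambda>k. if k = 0 then 0 else m (Suc k))"

lemma gN_apply: "gN N x 1 = N - 2 * weight x" "k \<ge> 2 \<Longrightarrow> gN N x k = x (k - 1)" "gN N x 0 = 0"
  by (auto simp: gN_def sh_def mk_def)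

lemma unsh_gN: "x \<in> Amon \<Longrightarrow> unsh (gN N x) = x"
  by (auto simp: unsh_def fun_eq_iff gN_apply Amon_def)

lemma weight_gN: "x \<in> Amon \<Longrightarrow> 2 * weight x \<le> N \<Longrightarrow> weight (gN N x) = N"
  by (simp add: gN_def weight_add Amon_FS weight_sh)

lemma degree_gN: "x \<in> Amon \<Longrightarrow> 2 * weight x \<le> N \<Longrightarrow> degree (gN N x) = N + degree x"
  by (simp add: gN_def degree_add Amon_FS degree_sh)

lemma gN_AA2: "x \<in> AA1mon \<Longrightarrow> 8 dvd N \<Longrightarrow> 2 * weight x \<le> N \<Longrightarrow> gN N x \<in> AA2mon"
proof -
  assume x: "x \<in> AA1mon" and N: "8 dvd N" "2 * weight x \<le> N"
  have "8 dvd 2 * weight x" using weight_AA1_dvd[OF x] by (auto elim!: dvdE)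
  then have "8 dvd N - 2 * weight x" using N by (simp add: dvd_diff_nat)
  moreover have "gN N x 2 = x 1" "gN N x 3 = x 2" by (simp_all add: gN_def sh_def One_nat_def)
  moreover have "gN N x \<in> Amon" using x by (simp add: AA1mon_def)
  ultimately show ?thesis using x by (simp add: AA2mon_def AA1mon_def gN_apply)
qed

lemma unsh_Amon: "m \<in> Amon \<Longrightarrow> unsh m \<in> Amon"
proof -
  assume a: "m \<in> Amon"
  have "{k. unsh m k \<noteq> 0} \<subseteq> (\<lambda>k. k - 1) ` {k. m k \<noteq> 0}"
  proof
    fix k assume "k \<in> {k. unsh m k \<noteq> 0}"
    then have "m (Suc k) \<noteq> 0" by (auto simp: unsh_def split: if_splits)
    then show "k \<in> (\<lambda>k. k - 1) ` {k. m k \<noteq> 0}" by (metis (mono_tags) diff_Suc_1 image_eqI mem_Collect_eq)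
  qed
  moreover have "finite ((\<lambda>k. k - 1) ` {k. m k \<noteq> 0})" using a by (simp add: Amon_def)
  ultimately have "finite {k. unsh m k \<noteq> 0}" by (rule finite_subset)
  then show ?thesis by (simp add: Amon_def unsh_def)
qed

lemma unsh_decomp: "m \<in> Amon \<Longrightarrow> m = mk (m 1) 0 0 + sh (unsh m)"
proof (rule ext)
  fix k assume "m \<in> Amon"
  then have m0: "m 0 = 0" by (simp add: Amon_def)
  show "m k = (mk (m 1) 0 0 + sh (unsh m)) k"
    by (cases "k = 0"; cases "k = 1") (auto simp: unsh_def sh_def mk_def m0)
qed

lemma weight_unsh: "m \<in> Amon \<Longrightarrow> weight m = m 1 + 2 * weight (unsh m)"
proof -
  assume a: "m \<in> Amon"
  have "weight m = weight (mk (m 1) 0 0 + sh (unsh m))" using unsh_decomp[OF a] by simp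
  also have "\<dots> = m 1 + 2 * weight (unsh m)"
    using unsh_Amon[OF a] by (simp add: weight_add Amon_FS weight_sh)
  finally show ?thesis .
qed

lemma gN_unsh: "m \<in> Amon \<Longrightarrow> weight m = N \<Longrightarrow> gN N (unsh m) = m"
proof -
  assume a: "m \<in> Amon" "weight m = N"
  have "N - 2 * weight (unsh m) = m 1" using weight_unsh[OF a(1)] a(2) by simp
  then show ?thesis using unsh_decomp[OF a(1)] by (simp add: gN_def)
qed

lemma unsh_AA1: "m \<in> AA2mon \<Longrightarrow> unsh m \<in> AA1mon"
  using unsh_Amon[of m] by (auto simp: AA2mon_def AA1mon_def unsh_def elim: dvd_trans[rotated])

lemma G_image: "gN (8 * j) ` N1 j = N1 (2 * j) \<inter> Fbasis j"
proof
  show "gN (8 * j) ` N1 j \<subseteq> N1 (2 * j) \<inter> Fbasis j"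
  proof
    fix y assume "y \<in> gN (8 * j) ` N1 j"
    then obtain x where x: "x \<in> N1 j" "y = gN (8 * j) x" by blast
    have xA: "x \<in> AA1mon" "weight x \<le> 4 * j" using x by (auto simp: N1_iff)
    have yA: "y \<in> AA2mon" using gN_AA2[OF xA(1)] xA x by simp
    have wy: "weight y = 8 * j" using weight_gN[OF AA1_Amon[OF xA(1)]] xA x by simp
    show "y \<in> N1 (2 * j) \<inter> Fbasis j"
      using yA wy AA2_AA1 tau1_AA2_id[OF yA] by (simp add: N1_iff Fbasis_iff)
  qed
next
  show "N1 (2 * j) \<inter> Fbasis j \<subseteq> gN (8 * j) ` N1 j"
  proof
    fix y assume y: "y \<in> N1 (2 * j) \<inter> Fbasis j"
    then have yA: "y \<in> AA1mon" "weight y \<le> 8 * j" "8 * j \<le> weight (tau1 y)"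
      by (auto simp: N1_iff Fbasis_iff)
    have yAm: "y \<in> Amon" using yA by (simp add: AA1mon_def)
    have "weight (tau2 y) = 0" using weight_tau[OF yAm] yA by simp
    then have "tau2 y = 0" using weight_eq_0[of "tau2 y"] by (simp add: tau2_mk)
    then have yy: "tau1 y = y" using tau_split[of y] by simp
    then have y2: "y \<in> AA2mon" using tau1_AA2[OF yAm] by simp
    have wy: "weight y = 8 * j" using yA yy by simp
    have "y = gN (8 * j) (unsh y)" using gN_unsh[OF yAm wy] by simp
    moreover have "unsh y \<in> N1 j"
      using unsh_AA1[OF y2] weight_unsh[OF yAm] wy by (simp add: N1_iff)
    ultimately show "y \<in> gN (8 * j) ` N1 j" by blast
  qed
qed

lemma Lin_if_single: "Lin (\<lambda>k. if P k then {\<phi> k} else {}) u = Lmap \<phi> (Filt P u)"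
proof -
  have "Lin (\<lambda>k. if P k then {\<phi> k} else {}) u = (\<Sum>k\<in>kys u. if P k then sng (\<phi> k) 1 else 0)"
    unfolding Lin_def by (rule sum.cong) auto
  also have "\<dots> = (\<Sum>k\<in>{k \<in> kys u. P k}. sng (\<phi> k) 1)"
    by (subst sum.inter_filter) auto
  also have "\<dots> = Lmap \<phi> (Filt P u)" by (simp add: Lmap_eq)
  finally show ?thesis .
qed

lemma Filt_Filt2: "Filt P (Filt Q u) = Filt (\<lambda>k. P k \<and> Q k) u"
  by (simp add: Filt_ind) (rule arg_cong[of _ _ ind], auto)

lemma Filt_cong: "(\<And>k. k \<in> kys u \<Longrightarrow> P k = Q k) \<Longrightarrow> Filt P u = Filt Q u"
  by (simp add: Filt_ind) (metis (mono_tags, lifting))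

lemma lsum_single_inj: "inj_on \<phi> {x \<in> X. P x} \<Longrightarrow> lsum (\<lambda>x. if P x then {\<phi> x} else {}) X = \<phi> ` {x \<in> X. P x}"
proof -
  assume inj: "inj_on \<phi> {x \<in> X. P x}"
  have "\<And>y. {x \<in> X. y \<in> (if P x then {\<phi> x} else {})} = {x \<in> X. P x \<and> \<phi> x = y}" by auto
  moreover have "\<And>y. card {x \<in> X. P x \<and> \<phi> x = y} = (if y \<in> \<phi> ` {x \<in> X. P x} then 1 else 0)"
  proof -
    fix y
    show "card {x \<in> X. P x \<and> \<phi> x = y} = (if y \<in> \<phi> ` {x \<in> X. P x} then 1 else 0)"
    proof (cases "y \<in> \<phi> ` {x \<in> X. P x}")
      case True
      then obtain x0 where x0: "x0 \<in> X" "P x0" "\<phi> x0 = y" by blast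
      then have "{x \<in> X. P x \<and> \<phi> x = y} = {x0}" using inj by (auto dest: inj_onD)
      then show ?thesis using True by simp
    next
      case False
      then have "{x \<in> X. P x \<and> \<phi> x = y} = {}" by auto
      then have "card {x \<in> X. P x \<and> \<phi> x = y} = 0" by (simp only: card.empty)
      with False show ?thesis by simp
    qed
  qed
  ultimately show ?thesis by (auto simp: lsum_def)
qed

lemma mor_cond:
  fixes f :: "'b \<Rightarrow> 'c set" and S :: "('a \<times> 'b) set"
  assumes "finite S" "\<And>c. finite (f c)" "finite B" "\<And>d. d \<in> B \<Longrightarrow> finite (g d)"
    and "Lin (\<lambda>(a, c). {(a, d) | d. d \<in> f c}) (ind S) = (\<Sum>d\<in>B. ind (g d))"
  shows "lsum (\<lambda>(a, c). {(a, d) | d. d \<in> f c}) S = lsum g B"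
proof -
  have fF: "\<And>x :: 'a \<times> 'b. finite ((\<lambda>(a, c). {(a, d) | d. d \<in> f c}) x)"
  proof -
    fix x :: "'a \<times> 'b"
    obtain a c where x: "x = (a, c)" by (cases x)
    have "{(a, d) | d. d \<in> f c} = Pair a ` f c" by auto
    then show "finite ((\<lambda>(a, c). {(a, d) | d. d \<in> f c}) x)" using assms(2) x by simp
  qed
  show ?thesis
  proof (rule ind_inj)
    show "finite (lsum (\<lambda>(a, c). {(a, d) | d. d \<in> f c}) S)" using assms(1) fF by (intro finite_lsum) auto
    show "finite (lsum g B)" using assms(3,4) by (intro finite_lsum) auto
    show "ind (lsum (\<lambda>(a, c). {(a, d) | d. d \<in> f c}) S) = ind (lsum g B)"
      using assms by (simp add: ind_lsum fF Lin_ind)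
  qed
qed



definition F1 :: "nat \<Rightarrow> mon \<Rightarrow> mon set" where "F1 j b = {gN (8 * j) b}"
definition F2 :: "nat \<Rightarrow> mon \<Rightarrow> mon set" where "F2 j b = (if b \<in> Fbasis j then {} else {b})"
definition Sel3 :: "nat \<Rightarrow> mon \<Rightarrow> bool" where
  "Sel3 j c \<longleftrightarrow> c \<in> AA1mon \<and> c \<notin> Fbasis j \<and> 8 * j < weight c"
definition F3 :: "nat \<Rightarrow> mon \<Rightarrow> mon set" where
  "F3 j c = (if Sel3 j c then {unsh (tau1 c)} else {})"

lemma lift_single: "(\<lambda>(a, c). {(a, d) | d. d \<in> {\<phi> c}}) = (\<lambda>k. {(fst k, \<phi> (snd k))})"
  by (auto simp: fun_eq_iff)

lemma lift_if: "(\<lambda>(a, c). {(a, d) | d. d \<in> (if P c then {\<phi> c} else {})})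
   = (\<lambda>k. if P (snd k) then {(fst k, \<phi> (snd k))} else {})"
  by (auto simp: fun_eq_iff)

lemma lift_id_if: "(\<lambda>(a, c). {(a, d) | d. d \<in> (if P c then {} else {c})})
   = (\<lambda>k. if \<not> P (snd k) then {k} else {})"
  by (auto simp: fun_eq_iff)

lemma ind_coact2: "e \<in> Amon \<Longrightarrow> ind (coact2 e) = pp (CP e)"
  using coact2_CP by blast

lemma finite_coact2: "e \<in> Amon \<Longrightarrow> finite (coact2 e)"
  using coact2_CP by blast

lemma coact2_keys: "e \<in> Amon \<Longrightarrow> coact2 e = kys (pp (CP e))"
  by (metis coact2_CP keys_ind)

lemma Qcoact: "e \<in> Amon \<Longrightarrow> finite (ccoact (Qcomod i) e) \<and>
   ind (ccoact (Qcomod i) e) = Filt (\<lambda>k. snd k \<notin> Fbasis (i + 1)) (pp (CP e))"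
proof -
  assume e: "e \<in> Amon"
  have "ccoact (Qcomod i) e = {k \<in> kys (pp (CP e)). snd k \<notin> Fbasis (i + 1)}"
    by (auto simp: Qcomod_def coact2_keys[OF e])
  then show ?thesis by (simp add: Filt_ind)
qed

lemma mor1: "is_comod_mor (SigmaN1 (8 * j) j) (SigmaN1 0 (2 * j)) (F1 j)"
  unfolding is_comod_mor_def
proof (intro ballI conjI)
  fix b assume b: "b \<in> cbasis (SigmaN1 (8 * j) j)"
  then have bN: "b \<in> N1 j" by (simp add: SigmaN1_def)
  then have bA: "b \<in> AA1mon" "weight b \<le> 4 * j" by (auto simp: N1_iff)
  have bAm: "b \<in> Amon" using bA by (simp add: AA1mon_def)
  have gA: "gN (8 * j) b \<in> Amon" using bAm by simp
  show "finite (F1 j b)" by (simp add: F1_def)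
  show "F1 j b \<subseteq> cbasis (SigmaN1 0 (2 * j))"
    using G_image bN by (auto simp: F1_def SigmaN1_def)
  show "\<And>c. c \<in> F1 j b \<Longrightarrow> cdeg (SigmaN1 0 (2 * j)) c = cdeg (SigmaN1 (8 * j) j) b"
    using degree_gN[OF bAm] bA by (simp add: F1_def SigmaN1_def)
  show "lsum (\<lambda>(a, c). {(a, d) | d. d \<in> F1 j c}) (ccoact (SigmaN1 (8 * j) j) b)
      = lsum (ccoact (SigmaN1 0 (2 * j))) (F1 j b)"
  proof (rule mor_cond)
    show "finite (ccoact (SigmaN1 (8 * j) j) b)" using finite_coact2[OF bAm] by (simp add: SigmaN1_def)
    show "\<And>c. finite (F1 j c)" by (simp add: F1_def)
    show "finite (F1 j b)" by (simp add: F1_def)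
    show "\<And>d. d \<in> F1 j b \<Longrightarrow> finite (ccoact (SigmaN1 0 (2 * j)) d)"
      using finite_coact2[OF gA] by (simp add: F1_def SigmaN1_def)
    have "Lin (\<lambda>(a, c). {(a, d) | d. d \<in> F1 j c}) (ind (ccoact (SigmaN1 (8 * j) j) b))
        = Lmap (psi (8 * j)) (pp (CP b))"
      by (simp add: F1_def SigmaN1_def ind_coact2[OF bAm] Lmap_def psi_def split_def)
    also have "\<dots> = pp (CP (gN (8 * j) b))" using lemmaD[OF bA(1), of "8 * j"] bA by simp
    also have "\<dots> = (\<Sum>d\<in>F1 j b. ind (ccoact (SigmaN1 0 (2 * j)) d))"
      by (simp add: F1_def SigmaN1_def ind_coact2[OF gA])
    finally show "Lin (\<lambda>(a, c). {(a, d) | d. d \<in> F1 j c}) (ind (ccoact (SigmaN1 (8 * j) j) b))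
        = (\<Sum>d\<in>F1 j b. ind (ccoact (SigmaN1 0 (2 * j)) d))" .
  qed
qed

lemma mor2: "j \<ge> 1 \<Longrightarrow> is_comod_mor (SigmaN1 0 (2 * j)) (Qcomod (j - 1)) (F2 j)"
  unfolding is_comod_mor_def
proof (intro ballI conjI)
  fix b assume j: "j \<ge> 1" and b: "b \<in> cbasis (SigmaN1 0 (2 * j))"
  then have bN: "b \<in> N1 (2 * j)" by (simp add: SigmaN1_def)
  then have bA: "b \<in> AA1mon" by (auto simp: N1_iff)
  have bAm: "b \<in> Amon" using bA by (simp add: AA1mon_def)
  have jj: "j - 1 + 1 = j" using j by simp
  show "finite (F2 j b)" by (simp add: F2_def)
  show "F2 j b \<subseteq> cbasis (Qcomod (j - 1))" using bA by (auto simp: F2_def Qcomod_def jj)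
  show "\<And>c. c \<in> F2 j b \<Longrightarrow> cdeg (Qcomod (j - 1)) c = cdeg (SigmaN1 0 (2 * j)) b"
    by (auto simp: F2_def Qcomod_def SigmaN1_def split: if_splits)
  show "lsum (\<lambda>(a, c). {(a, d) | d. d \<in> F2 j c}) (ccoact (SigmaN1 0 (2 * j)) b)
      = lsum (ccoact (Qcomod (j - 1))) (F2 j b)"
  proof (rule mor_cond)
    show "finite (ccoact (SigmaN1 0 (2 * j)) b)" using finite_coact2[OF bAm] by (simp add: SigmaN1_def)
    show "\<And>c. finite (F2 j c)" by (simp add: F2_def)
    show "finite (F2 j b)" by (simp add: F2_def)
    show "\<And>d. d \<in> F2 j b \<Longrightarrow> finite (ccoact (Qcomod (j - 1)) d)"
      using Qcoact[OF bAm] by (auto simp: F2_def split: if_splits)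
    have "Lin (\<lambda>(a, c). {(a, d) | d. d \<in> F2 j c}) (ind (ccoact (SigmaN1 0 (2 * j)) b))
        = Filt (\<lambda>k. snd k \<notin> Fbasis j) (pp (CP b))"
      by (simp add: F2_def lift_id_if SigmaN1_def ind_coact2[OF bAm] Filt_def)
    also have "\<dots> = (\<Sum>d\<in>F2 j b. ind (ccoact (Qcomod (j - 1)) d))"
    proof (cases "b \<in> Fbasis j")
      case True
      have "Filt (\<lambda>k. snd k \<notin> Fbasis j) (pp (CP b)) = 0"
      proof (rule Filt_zero_if)
        fix k assume "k \<in> kys (pp (CP b))"
        then show "\<not> snd k \<notin> Fbasis j" using subcomod[OF True, of "fst k" "snd k"] by simp
      qed
      then show ?thesis using True by (simp add: F2_def)
    next
      case False
      then show ?thesis using Qcoact[OF bAm, of "j - 1"] by (simp add: F2_def jj)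
    qed
    finally show "Lin (\<lambda>(a, c). {(a, d) | d. d \<in> F2 j c}) (ind (ccoact (SigmaN1 0 (2 * j)) b))
        = (\<Sum>d\<in>F2 j b. ind (ccoact (Qcomod (j - 1)) d))" .
  qed
qed



lemma SelW_facts:
  assumes "SelW w c"
  shows "tau1 c \<in> AA2mon" "weight (tau1 c) = w" "c = tau1 c + top"
    "unsh (tau1 c) \<in> AA1mon" "2 * weight (unsh (tau1 c)) \<le> w" "gN w (unsh (tau1 c)) = tau1 c"
proof -
  have c: "c \<in> AA1mon" "tau2 c = top" "weight (tau1 c) = w" using assms by (auto simp: SelW_def)
  show t: "tau1 c \<in> AA2mon" using tau1_AA2 AA1_Amon c by blast
  show "weight (tau1 c) = w" by (rule c(3))
  show "c = tau1 c + top" using tau_split[of c] c by simp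
  show "unsh (tau1 c) \<in> AA1mon" using unsh_AA1[OF t] .
  show "2 * weight (unsh (tau1 c)) \<le> w" using weight_unsh[OF AA2_Amon[OF t]] c by simp
  show "gN w (unsh (tau1 c)) = tau1 c" using gN_unsh[OF AA2_Amon[OF t]] c by simp
qed

lemma Sel3_SelW: "j \<ge> 1 \<Longrightarrow> Sel3 j c \<longleftrightarrow> SelW (8 * (j - 1)) c"
  using Sel_iff[of j c] by (auto simp: Sel3_def SelW_def)

lemma lift_F3: "(\<lambda>(a, d). {(a, d') | d'. d' \<in> F3 j d})
   = (\<lambda>k. if Sel3 j (snd k) then {(fst k, unsh (tau1 (snd k)))} else {})"
  by (auto simp: fun_eq_iff F3_def)

lemma mor3: "j \<ge> 1 \<Longrightarrow> is_comod_mor (Qcomod (j - 1)) (SigmaN1 (8 * j + 9) (j - 1)) (F3 j)"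
  unfolding is_comod_mor_def
proof (intro ballI conjI)
  fix c assume j: "j \<ge> 1" and c: "c \<in> cbasis (Qcomod (j - 1))"
  have jj: "j - 1 + 1 = j" using j by simp
  have cA: "c \<in> AA1mon" "c \<notin> Fbasis j" using c by (auto simp: Qcomod_def jj)
  have cAm: "c \<in> Amon" using cA by (simp add: AA1mon_def)
  show "finite (F3 j c)" by (simp add: F3_def)
  show "F3 j c \<subseteq> cbasis (SigmaN1 (8 * j + 9) (j - 1))"
  proof (cases "Sel3 j c")
    case True
    then have S: "SelW (8 * (j - 1)) c" using Sel3_SelW[OF j] by simp
    then show ?thesis using SelW_facts[OF S] True by (auto simp: F3_def SigmaN1_def N1_iff)
  qed (simp add: F3_def)
  show "\<And>d. d \<in> F3 j c \<Longrightarrow> cdeg (SigmaN1 (8 * j + 9) (j - 1)) d = cdeg (Qcomod (j - 1)) c"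
  proof -
    fix d assume d: "d \<in> F3 j c"
    then have Sc: "Sel3 j c" and dd: "d = unsh (tau1 c)" by (auto simp: F3_def split: if_splits)
    then have S: "SelW (8 * (j - 1)) c" using Sel3_SelW[OF j] by simp
    note F = SelW_facts[OF S]
    have "degree c = degree (tau1 c) + degree top" using degree_tau[OF cAm] S by (simp add: SelW_def)
    also have "degree (tau1 c) = 8 * (j - 1) + degree d"
      using degree_gN[OF AA1_Amon[OF F(4)] F(5)] F(6) dd by simp
    finally show "cdeg (SigmaN1 (8 * j + 9) (j - 1)) d = cdeg (Qcomod (j - 1)) c"
      using j by (simp add: SigmaN1_def Qcomod_def)
  qed
  show "lsum (\<lambda>(a, d). {(a, d') | d'. d' \<in> F3 j d}) (ccoact (Qcomod (j - 1)) c)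
      = lsum (ccoact (SigmaN1 (8 * j + 9) (j - 1))) (F3 j c)"
  proof (rule mor_cond)
    show "finite (ccoact (Qcomod (j - 1)) c)" using Qcoact[OF cAm] by blast
    show "\<And>d. finite (F3 j d)" by (simp add: F3_def)
    show "finite (F3 j c)" by (simp add: F3_def)
    show "\<And>d. d \<in> F3 j c \<Longrightarrow> finite (ccoact (SigmaN1 (8 * j + 9) (j - 1)) d)"
      using unsh_Amon[OF AA2_Amon[OF tau1_AA2[OF cAm]]]
      by (auto simp: SigmaN1_def F3_def finite_coact2 split: if_splits)
    let ?u = "pp (CP c)"
    let ?hh = "\<lambda>k::mon \<times> mon. (fst k, unsh (tau1 (snd k)))"
    have keysA: "\<And>k. k \<in> kys ?u \<Longrightarrow> snd k \<in> AA1mon"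
      using K2[OF cA(1)] by (auto simp: allkeys_def RA1_def keys_pp)
    have "Lin (\<lambda>(a, d). {(a, d') | d'. d' \<in> F3 j d}) (ind (ccoact (Qcomod (j - 1)) c))
        = Lmap ?hh (Filt (\<lambda>k. Sel3 j (snd k)) (Filt (\<lambda>k. snd k \<notin> Fbasis j) ?u))"
      using Qcoact[OF cAm, of "j - 1"] by (simp add: lift_F3 Lin_if_single jj)
    also have "Filt (\<lambda>k. Sel3 j (snd k)) (Filt (\<lambda>k. snd k \<notin> Fbasis j) ?u)
        = Filt (\<lambda>k. SelW (8 * (j - 1)) (snd k)) ?u"
      unfolding Filt_Filt2
    proof (rule Filt_cong)
      fix k assume "k \<in> kys ?u"
      then show "(Sel3 j (snd k) \<and> snd k \<notin> Fbasis j) = SelW (8 * (j - 1)) (snd k)"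
        using Sel3_SelW[OF j] by (auto simp: Sel3_def)
    qed
    also have "Lmap ?hh (Filt (\<lambda>k. SelW (8 * (j - 1)) (snd k)) ?u)
        = (\<Sum>d\<in>F3 j c. ind (ccoact (SigmaN1 (8 * j + 9) (j - 1)) d))"
    proof (cases "Sel3 j c")
      case True
      then have S: "SelW (8 * (j - 1)) c" using Sel3_SelW[OF j] by simp
      note F = SelW_facts[OF S]
      define m where "m = tau1 c"
      define z where "z = unsh m"
      have zA: "z \<in> AA1mon" using F(4) by (simp add: z_def m_def)
      have zAm: "z \<in> Amon" using zA by (simp add: AA1mon_def)
      have mA: "m \<in> AA2mon" using F(1) by (simp add: m_def)
      have "Filt (\<lambda>k. SelW (8 * (j - 1)) (snd k)) ?u = Filt (\<lambda>k. SelW (weight m) (snd k)) (pp (CP (m + top)))"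
        using F(2,3) by (simp add: m_def)
      also have "\<dots> = Lmap (\<lambda>k. (fst k, snd k + top)) (pp (CP m))" by (rule lemmaF[OF mA])
      finally have e1: "Filt (\<lambda>k. SelW (8 * (j - 1)) (snd k)) ?u = Lmap (\<lambda>k. (fst k, snd k + top)) (pp (CP m))" .
      have e2: "pp (CP m) = Lmap (psi (8 * (j - 1))) (pp (CP z))"
      proof -
        have "m = gN (8 * (j - 1)) z" using F(6) by (simp add: z_def m_def)
        then show ?thesis using lemmaD[OF zA, of "8 * (j - 1)"] F(5) by (simp add: z_def m_def)
      qed
      have "Lmap ?hh (Filt (\<lambda>k. SelW (8 * (j - 1)) (snd k)) ?u) = Lmap ?hh (Lmap (\<lambda>k. (fst k, snd k + top)) (pp (CP m)))"
        by (simp only: e1)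
      also have "\<dots> = Lmap (\<lambda>k. (fst k, unsh (snd k))) (pp (CP m))"
        unfolding Lmap_Lmap
      proof (rule Lmap_cong)
        fix k assume "k \<in> kys (pp (CP m))"
        then have "snd k \<in> AA2mon" using K1[OF mA] by (auto simp: allkeys_def RK_def keys_pp)
        then show "(?hh \<circ> (\<lambda>k. (fst k, snd k + top))) k = (fst k, unsh (snd k))"
          using tau1_add_AA2[of "snd k" top] by simp
      qed
      also have "\<dots> = Lmap (\<lambda>k. (fst k, unsh (snd k))) (Lmap (psi (8 * (j - 1))) (pp (CP z)))"
        by (simp only: e2)
      also have "\<dots> = pp (CP z)"
        unfolding Lmap_Lmap
      proof (rule Lmap_id)
        fix k assume "k \<in> kys (pp (CP z))"
        then have "snd k \<in> Amon" using K3[OF zAm] by (auto simp: allkeys_def RW_def keys_pp)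
        then show "((\<lambda>k. (fst k, unsh (snd k))) \<circ> psi (8 * (j - 1))) k = k"
          by (simp add: psi_def unsh_gN)
      qed
      also have "pp (CP z) = (\<Sum>d\<in>F3 j c. ind (ccoact (SigmaN1 (8 * j + 9) (j - 1)) d))"
        using True ind_coact2[OF zAm] by (simp add: F3_def SigmaN1_def z_def m_def)
      finally show ?thesis .
    next
      case False
      have "Filt (\<lambda>k. SelW (8 * (j - 1)) (snd k)) ?u = 0"
      proof (rule Filt_zero_if)
        fix k assume k: "k \<in> kys ?u"
        have "weight (snd k) \<le> weight c" using K3[OF cAm] k by (auto simp: allkeys_def RW_def keys_pp)
        moreover have "weight c \<le> 8 * j" using False cA by (auto simp: Sel3_def)
        moreover have "SelW (8 * (j - 1)) (snd k) \<Longrightarrow> 8 * j < weight (snd k)"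
          using Sel_iff[OF j keysA[OF k]] by blast
        ultimately show "\<not> SelW (8 * (j - 1)) (snd k)" by linarith
      qed
      then show ?thesis using False by (simp add: F3_def Lmap_def)
    qed
    finally show "Lin (\<lambda>(a, d). {(a, d') | d'. d' \<in> F3 j d}) (ind (ccoact (Qcomod (j - 1)) c))
        = (\<Sum>d\<in>F3 j c. ind (ccoact (SigmaN1 (8 * j + 9) (j - 1)) d))" .
  qed
qed



lemma lsum_single: "inj_on \<phi> X \<Longrightarrow> lsum (\<lambda>x. {\<phi> x}) X = \<phi> ` X"
  using lsum_single_inj[of \<phi> X "\<lambda>_. True"] by simp

lemma F2_if: "F2 j = (\<lambda>x. if x \<notin> Fbasis j then {id x} else {})"
  by (auto simp: fun_eq_iff F2_def)

lemma F3_if: "F3 j = (\<lambda>x. if Sel3 j x then {unsh (tau1 x)} else {})"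
  by (auto simp: fun_eq_iff F3_def)

lemma lsum_F2: "lsum (F2 j) Y = {y \<in> Y. y \<notin> Fbasis j}"
proof -
  have "lsum (F2 j) Y = id ` {y \<in> Y. y \<notin> Fbasis j}"
    unfolding F2_if by (rule lsum_single_inj) simp
  then show ?thesis by simp
qed

lemma Sel3_rep: "j \<ge> 1 \<Longrightarrow> Sel3 j c \<Longrightarrow> c = gN (8 * (j - 1)) (unsh (tau1 c)) + top"
  using SelW_facts[of "8 * (j - 1)" c] Sel3_SelW[of j c] by simp

lemma lsum_F3: "j \<ge> 1 \<Longrightarrow> lsum (F3 j) Y = (\<lambda>x. unsh (tau1 x)) ` {y \<in> Y. Sel3 j y}"
  unfolding F3_if
proof (rule lsum_single_inj)
  assume j: "j \<ge> 1"
  show "inj_on (\<lambda>x. unsh (tau1 x)) {y \<in> Y. Sel3 j y}"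
  proof (rule inj_onI)
    fix x y assume "x \<in> {y \<in> Y. Sel3 j y}" "y \<in> {y \<in> Y. Sel3 j y}" "unsh (tau1 x) = unsh (tau1 y)"
    then show "x = y" using Sel3_rep[OF j, of x] Sel3_rep[OF j, of y] by simp
  qed
qed

lemma Sel3_top:
  assumes j: "j \<ge> 1" and z: "z \<in> N1 (j - 1)"
  shows "Sel3 j (gN (8 * (j - 1)) z + top)" "unsh (tau1 (gN (8 * (j - 1)) z + top)) = z"
proof -
  have zA: "z \<in> AA1mon" "2 * weight z \<le> 8 * (j - 1)" using z by (auto simp: N1_iff)
  have zAm: "z \<in> Amon" using zA by (simp add: AA1mon_def)
  have m: "gN (8 * (j - 1)) z \<in> AA2mon" using gN_AA2[OF zA(1) _ zA(2)] by simp
  have w: "weight (gN (8 * (j - 1)) z) = 8 * (j - 1)" using weight_gN[OF zAm zA(2)] .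
  have t1: "tau1 (gN (8 * (j - 1)) z + top) = gN (8 * (j - 1)) z" using tau1_add_AA2[OF m, of top] by simp
  have t2: "tau2 (gN (8 * (j - 1)) z + top) = top" using tau2_add_AA2[OF m, of top] by simp
  have "SelW (8 * (j - 1)) (gN (8 * (j - 1)) z + top)"
    using t1 t2 w m AA2_AA1 by (auto simp: SelW_def)
  then show "Sel3 j (gN (8 * (j - 1)) z + top)" using Sel3_SelW[OF j] by simp
  show "unsh (tau1 (gN (8 * (j - 1)) z + top)) = z" using t1 unsh_gN[OF zAm] by simp
qed

lemma Sel3_N1: "j \<ge> 1 \<Longrightarrow> Sel3 j c \<Longrightarrow> unsh (tau1 c) \<in> N1 (j - 1)"
  using SelW_facts[of "8 * (j - 1)" c] Sel3_SelW[of j c] by (auto simp: N1_iff)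

lemma gN_inj: "inj_on (gN N) Amon"
  by (rule inj_onI) (metis unsh_gN)

lemma exact_part:
  assumes j: "j \<ge> 1"
  shows "exact4 (SigmaN1 (8 * j) j) (SigmaN1 0 (2 * j)) (Qcomod (j - 1))
                  (SigmaN1 (8 * j + 9) (j - 1)) (F1 j) (F2 j) (F3 j)"
proof -
  have jj: "j - 1 + 1 = j" using j by simp
  have N1A: "N1 k \<subseteq> Amon" for k by (auto simp: N1_iff AA1mon_def)
  have lsF1: "X \<subseteq> N1 j \<Longrightarrow> lsum (F1 j) X = gN (8 * j) ` X" for X
    unfolding F1_def by (rule lsum_single) (meson N1A gN_inj inj_on_subset subset_trans)
  have E1: "\<forall>X\<in>elems (SigmaN1 (8 * j) j). lsum (F1 j) X = {} \<longrightarrow> X = {}"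
    by (auto simp: elems_def SigmaN1_def lsF1)
  have E2: "lsum (F1 j) ` elems (SigmaN1 (8 * j) j)
      = {Y \<in> elems (SigmaN1 0 (2 * j)). lsum (F2 j) Y = {}}"
  proof
    show "lsum (F1 j) ` elems (SigmaN1 (8 * j) j) \<subseteq> {Y \<in> elems (SigmaN1 0 (2 * j)). lsum (F2 j) Y = {}}"
      using G_image by (auto simp: elems_def SigmaN1_def lsF1 lsum_F2)
  next
    show "{Y \<in> elems (SigmaN1 0 (2 * j)). lsum (F2 j) Y = {}} \<subseteq> lsum (F1 j) ` elems (SigmaN1 (8 * j) j)"
    proof
      fix Y assume "Y \<in> {Y \<in> elems (SigmaN1 0 (2 * j)). lsum (F2 j) Y = {}}"
      then have Y: "finite Y" "Y \<subseteq> gN (8 * j) ` N1 j"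
        using G_image by (auto simp: elems_def SigmaN1_def lsum_F2)
      then obtain X where X: "X \<subseteq> N1 j" "finite X" "Y = gN (8 * j) ` X"
        using finite_subset_image[OF Y(1) Y(2)] by blast
      then show "Y \<in> lsum (F1 j) ` elems (SigmaN1 (8 * j) j)"
        by (auto simp: elems_def SigmaN1_def lsF1 intro!: image_eqI[where x = X])
    qed
  qed
  have nS: "y \<in> AA1mon \<Longrightarrow> y \<notin> Fbasis j \<Longrightarrow> \<not> Sel3 j y \<longleftrightarrow> weight y \<le> 8 * j" for y
    by (auto simp: Sel3_def)
  have E3: "lsum (F2 j) ` elems (SigmaN1 0 (2 * j)) = {Y \<in> elems (Qcomod (j - 1)). lsum (F3 j) Y = {}}"
  proof
    show "lsum (F2 j) ` elems (SigmaN1 0 (2 * j)) \<subseteq> {Y \<in> elems (Qcomod (j - 1)). lsum (F3 j) Y = {}}"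
      by (auto simp: elems_def SigmaN1_def Qcomod_def jj lsum_F2 lsum_F3[OF j] N1_iff Sel3_def)
  next
    show "{Y \<in> elems (Qcomod (j - 1)). lsum (F3 j) Y = {}} \<subseteq> lsum (F2 j) ` elems (SigmaN1 0 (2 * j))"
    proof
      fix Y assume "Y \<in> {Y \<in> elems (Qcomod (j - 1)). lsum (F3 j) Y = {}}"
      then have Y: "finite Y" "Y \<subseteq> AA1mon - Fbasis j" "\<forall>y\<in>Y. \<not> Sel3 j y"
        by (auto simp: elems_def Qcomod_def jj lsum_F3[OF j])
      have "Y \<subseteq> N1 (2 * j)"
      proof
        fix y assume "y \<in> Y"
        then have y: "y \<in> AA1mon" "y \<notin> Fbasis j" "\<not> Sel3 j y" using Y by auto
        then have "weight y \<le> 8 * j" using nS[OF y(1,2)] by simp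
        then show "y \<in> N1 (2 * j)" using y by (simp add: N1_iff)
      qed
      moreover have "lsum (F2 j) Y = Y" using Y by (auto simp: lsum_F2)
      ultimately show "Y \<in> lsum (F2 j) ` elems (SigmaN1 0 (2 * j))"
        using Y by (auto simp: elems_def SigmaN1_def intro!: image_eqI[where x = Y])
    qed
  qed
  have E4: "lsum (F3 j) ` elems (Qcomod (j - 1)) = elems (SigmaN1 (8 * j + 9) (j - 1))"
  proof
    show "lsum (F3 j) ` elems (Qcomod (j - 1)) \<subseteq> elems (SigmaN1 (8 * j + 9) (j - 1))"
      using Sel3_N1[OF j] by (auto simp: elems_def SigmaN1_def lsum_F3[OF j])
  next
    show "elems (SigmaN1 (8 * j + 9) (j - 1)) \<subseteq> lsum (F3 j) ` elems (Qcomod (j - 1))"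
    proof
      fix Z assume "Z \<in> elems (SigmaN1 (8 * j + 9) (j - 1))"
      then have Z: "finite Z" "Z \<subseteq> N1 (j - 1)" by (auto simp: elems_def SigmaN1_def)
      let ?Y = "(\<lambda>z. gN (8 * (j - 1)) z + top) ` Z"
      have S: "\<forall>y\<in>?Y. Sel3 j y" using Sel3_top(1)[OF j] Z by auto
      have "?Y \<in> elems (Qcomod (j - 1))"
        using S Z by (auto simp: elems_def Qcomod_def jj Sel3_def)
      moreover have "lsum (F3 j) ?Y = Z"
      proof -
        have "{y \<in> ?Y. Sel3 j y} = ?Y" using S by blast
        then have "lsum (F3 j) ?Y = (\<lambda>x. unsh (tau1 x)) ` ?Y" by (simp only: lsum_F3[OF j])
        also have "\<dots> = Z"
        proof -
          have fz: "\<And>z. z \<in> Z \<Longrightarrow> unsh (tau1 (gN (8 * (j - 1)) z + top)) = z" using Sel3_top(2)[OF j] Z by auto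
          show ?thesis unfolding image_image
          proof (intro equalityI subsetI)
            fix x assume "x \<in> (\<lambda>z. unsh (tau1 (gN (8 * (j - 1)) z + top))) ` Z"
            then show "x \<in> Z" using fz by auto
          next
            fix x assume x: "x \<in> Z"
            show "x \<in> (\<lambda>z. unsh (tau1 (gN (8 * (j - 1)) z + top))) ` Z"
              by (rule rev_image_eqI[OF x]) (simp add: fz[OF x])
          qed
        qed
        finally show ?thesis .
      qed
      ultimately show "Z \<in> lsum (F3 j) ` elems (Qcomod (j - 1))" by (metis image_eqI)
    qed
  qed
  show ?thesis unfolding exact4_def using E1 E2 E3 E4 by blast
qed

theorem lemma7p2:
  fixes j :: nat
  assumes "j \<ge> 1"
  shows "\<exists>f1 f2 f3.
           is_comod_mor (SigmaN1 (8 * j) j) (SigmaN1 0 (2 * j)) f1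
         \<and> is_comod_mor (SigmaN1 0 (2 * j)) (Qcomod (j - 1)) f2
         \<and> is_comod_mor (Qcomod (j - 1)) (SigmaN1 (8 * j + 9) (j - 1)) f3
         \<and> exact4 (SigmaN1 (8 * j) j) (SigmaN1 0 (2 * j)) (Qcomod (j - 1))
                  (SigmaN1 (8 * j + 9) (j - 1)) f1 f2 f3"
  using mor1[of j] mor2[OF assms] mor3[OF assms] exact_part[OF assms] by blast

end
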